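(* Let $K$ be a perfect field, $n=2$, and let $X=V_+(F)\subset\mathbb{P}(V)\cong\mathbb{P}^2_K$ be a plane curve of degree $d\ge3$ which is unstable (i.e. not semistable). (i) At least one of the following holds: (a) $X$ contains a line $L$ with multiplicity $m>d/3$; (b) $X$ contains a $K$-rational point $P$ of multiplicity $m>2d/3$; (c) $X$ contains a line $L=V_+(\ell)$ with multiplicity $m>0$, and writing $F=\ell^mG$ with $\ell\nmid G$ and $Y=V_+(G)$, the curves $L$ and $Y$ meet in a $K$-rational point $P$ with intersection multiplicity $>(d-m)/2$; (d) $X$ contains a $K$-rational point $P$ of multiplicity $m>d/2$ such that the tangent cone of $X$ at $P$ contains a line $L$ with multiplicity $>m/2$. (ii) If (a) holds for a line $L$ and $\mathcal{E}=(x_0,x_1,x_2)$ is any coordinate system with $L=V_+(x_0)$, then $(\mathcal{E},(2,-1,-1))$ is an instability for $X$. (iii) If (b) holds for a point $P$ and $\mathcal{E}=(x_0,x_1,x_2)$ is any coordinate system with $\{P\}=V_+(x_0,x_1)$, then $(\mathcal{E},(1,1,-2))$ is an instability for $X$. (iv) If (a) and (b) both fail, then there is a unique pair $(L,P)$ consisting of a line $L$ and a $K$-rational point $P\in L$ such that: (c) or (d) holds for $(L,P)$, and for every coordinate system $\mathcal{E}=(x_0,x_1,x_2)$ with $L=V_+(x_0)$ and $\{P\}=V_+(x_0,x_1)$ there exists a balanced ordered weight vector $w$ for which $(\mathcal{E},w)$ is an instability for $X$.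
   Context: $V$ is a 3-dimensional $K$-vector space, $\mathbb{P}(V)=\mathrm{Proj}\,K[V]$, $F\in K[V]_d$ nonzero. A coordinate system is a basis $\mathcal{E}=(x_0,x_1,x_2)$ of $V^*$. Writing $F=\sum_i a_ix_0^{i_0}x_1^{i_1}x_2^{i_2}$ ($i_0+i_1+i_2=d$), let $I_{F,\mathcal{E}}=\{i:a_i\ne0\}$ and $\langle i,w\rangle=\sum_j i_jw_j$. A weight vector $w\in\mathbb{Z}^3$ is balanced if $w_0+w_1+w_2=0$ and ordered if $w_0\ge w_1\ge w_2$. A pair $(\mathcal{E},w)$ with $w$ balanced and ordered is an instability for $X$ if $\langle i,w\rangle>0$ for all $i\in I_{F,\mathcal{E}}$. $X$ is semistable iff no instability exists (Hilbert–Mumford–Kempf numerical criterion for the action of $\mathrm{SL}(V)$ on forms; unstable means not semistable). *)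

theory Defs
  imports "HOL-Library.Poly_Mapping" "HOL-Computational_Algebra.Polynomial"
begin

text \<open>We fix V = K^3 with standard dual basis X0, X1, X2. The polynomial ring K[V] is
 represented as (nat =>0 nat) =>0 'k (finitely supported coefficient functions on monomials);
 only the variables 0,1,2 are used. Vectors of V (points) and of V* (linear forms) are
 triples.\<close>

type_synonym 'k mpoly = "(nat \<Rightarrow>\<^sub>0 nat) \<Rightarrow>\<^sub>0 'k"
type_synonym 'k vec3 = "'k \<times> 'k \<times> 'k"

definition Var :: "nat \<Rightarrow> 'k::comm_ring_1 mpoly" where
  "Var j = Poly_Mapping.single (Poly_Mapping.single j 1) 1"

definition Const :: "'k::comm_ring_1 \<Rightarrow> 'k mpoly" where
  "Const c = Poly_Mapping.single 0 c"

definition comp :: "'k vec3 \<Rightarrow> nat \<Rightarrow> 'k" where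
  "comp v j = (case v of (a, b, c) \<Rightarrow> (if j = 0 then a else if j = 1 then b else c))"

definition dot :: "'k::comm_ring_1 vec3 \<Rightarrow> 'k vec3 \<Rightarrow> 'k" where
  "dot u v = comp u 0 * comp v 0 + comp u 1 * comp v 1 + comp u 2 * comp v 2"

definition lin :: "'k::comm_ring_1 vec3 \<Rightarrow> 'k mpoly" where
  "lin c = Const (comp c 0) * Var 0 + Const (comp c 1) * Var 1 + Const (comp c 2) * Var 2"

definition proportional :: "'k::field vec3 \<Rightarrow> 'k vec3 \<Rightarrow> bool" where
  "proportional u v \<longleftrightarrow> (\<exists>c. c \<noteq> 0 \<and> u = (c * comp v 0, c * comp v 1, c * comp v 2))"

definition subst :: "('k::comm_ring_1 \<Rightarrow> 'b::comm_ring_1) \<Rightarrow> (nat \<Rightarrow> 'b) \<Rightarrow> 'k mpoly \<Rightarrow> 'b" where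
  "subst phi sigma F = sum (\<lambda>mon::nat \<Rightarrow>\<^sub>0 nat. phi (Poly_Mapping.lookup F mon) * prod (\<lambda>j. sigma j ^ Poly_Mapping.lookup mon j) (Poly_Mapping.keys mon)) (Poly_Mapping.keys F)"

definition is_form :: "nat \<Rightarrow> 'k::comm_ring_1 mpoly \<Rightarrow> bool" where
  "is_form d F \<longleftrightarrow> F \<noteq> 0 \<and>
     (\<forall>m\<in>Poly_Mapping.keys F. Poly_Mapping.keys m \<subseteq> {0,1,2} \<and> Poly_Mapping.lookup m 0 + Poly_Mapping.lookup m 1 + Poly_Mapping.lookup m 2 = d)"

type_synonym 'k coordsys = "'k vec3 \<times> 'k vec3 \<times> 'k vec3"

definition det3 :: "'k::comm_ring_1 coordsys \<Rightarrow> 'k" where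
  "det3 E = (case E of (u, v, w) \<Rightarrow>
      comp u 0 * (comp v 1 * comp w 2 - comp v 2 * comp w 1)
    - comp u 1 * (comp v 0 * comp w 2 - comp v 2 * comp w 0)
    + comp u 2 * (comp v 0 * comp w 1 - comp v 1 * comp w 0))"

text \<open>A coordinate system is a basis (x0,x1,x2) of V*, given by coefficient vectors.\<close>
definition coord_sys :: "'k::comm_ring_1 coordsys \<Rightarrow> bool" where
  "coord_sys E \<longleftrightarrow> det3 E \<noteq> 0"

definition exps :: "nat \<Rightarrow> (nat \<times> nat \<times> nat) set" where
  "exps d = {(i0, i1, i2). i0 + i1 + i2 = d}"

definition emono :: "'k::comm_ring_1 coordsys \<Rightarrow> nat \<times> nat \<times> nat \<Rightarrow> 'k mpoly" where
  "emono E i = (case E of (x0, x1, x2) \<Rightarrow> case i of (i0, i1, i2) \<Rightarrow>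
      lin x0 ^ i0 * lin x1 ^ i1 * lin x2 ^ i2)"

definition coeffs_in :: "nat \<Rightarrow> 'k::comm_ring_1 coordsys \<Rightarrow> 'k mpoly \<Rightarrow> nat \<times> nat \<times> nat \<Rightarrow> 'k" where
  "coeffs_in d E F = (THE a. (\<forall>i. a i \<noteq> 0 \<longrightarrow> i \<in> exps d) \<and>
        F = (\<Sum>i\<in>exps d. Const (a i) * emono E i))"

definition support_in :: "nat \<Rightarrow> 'k::comm_ring_1 coordsys \<Rightarrow> 'k mpoly \<Rightarrow> (nat \<times> nat \<times> nat) set" where
  "support_in d E F = {i \<in> exps d. coeffs_in d E F i \<noteq> 0}"

definition pairing :: "nat \<times> nat \<times> nat \<Rightarrow> int \<times> int \<times> int \<Rightarrow> int" where
  "pairing i w = (case i of (i0, i1, i2) \<Rightarrow> case w of (w0, w1, w2) \<Rightarrow>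
      int i0 * w0 + int i1 * w1 + int i2 * w2)"

definition balanced :: "int \<times> int \<times> int \<Rightarrow> bool" where
  "balanced w = (case w of (w0, w1, w2) \<Rightarrow> w0 + w1 + w2 = 0)"

definition ordered :: "int \<times> int \<times> int \<Rightarrow> bool" where
  "ordered w = (case w of (w0, w1, w2) \<Rightarrow> w0 \<ge> w1 \<and> w1 \<ge> w2)"

definition instability :: "nat \<Rightarrow> 'k::comm_ring_1 mpoly \<Rightarrow> 'k coordsys \<Rightarrow> int \<times> int \<times> int \<Rightarrow> bool" where
  "instability d F E w \<longleftrightarrow> coord_sys E \<and> balanced w \<and> ordered w \<and>
      (\<forall>i\<in>support_in d E F. pairing i w > 0)"

definition semistable :: "nat \<Rightarrow> 'k::comm_ring_1 mpoly \<Rightarrow> bool" where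
  "semistable d F \<longleftrightarrow> \<not> (\<exists>E w. instability d F E w)"

definition perfect_field :: "'k::field itself \<Rightarrow> bool" where
  "perfect_field _ \<longleftrightarrow> CHAR('k) = 0 \<or> (\<forall>y::'k. \<exists>x. x ^ CHAR('k) = y)"

definition line_mult :: "'k::field vec3 \<Rightarrow> 'k mpoly \<Rightarrow> nat" where
  "line_mult l F = (GREATEST e. lin l ^ e dvd F)"

text \<open>Taylor expansion of F at the point p: F(p + s x) as a polynomial in s with
 coefficients in K[V]. The s^k coefficient is a form of degree k in x.\<close>
definition taylor :: "'k::field vec3 \<Rightarrow> 'k mpoly \<Rightarrow> 'k mpoly poly" where
  "taylor p F = subst (\<lambda>c. [:Const c:]) (\<lambda>j. [:Const (comp p j), Var j:]) F"

definition point_mult :: "'k::field vec3 \<Rightarrow> 'k mpoly \<Rightarrow> nat" where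
  "point_mult p F = (LEAST k. coeff (taylor p F) k \<noteq> 0)"

definition tangent_cone :: "'k::field vec3 \<Rightarrow> 'k mpoly \<Rightarrow> 'k mpoly" where
  "tangent_cone p F = coeff (taylor p F) (point_mult p F)"

text \<open>Intersection multiplicity at p of the line V+(l) (through p) with V+(G), l not dividing G:
 the order of vanishing at p of G restricted to the line, parametrised as p + s q
 for a point q on the line different from p.\<close>
definition int_mult :: "'k::field vec3 \<Rightarrow> 'k vec3 \<Rightarrow> 'k mpoly \<Rightarrow> nat" where
  "int_mult l p G = (let q = (SOME q. q \<noteq> (0, 0, 0) \<and> dot l q = 0 \<and> \<not> proportional q p) in
     (LEAST k. coeff (subst (\<lambda>c. [:c:]) (\<lambda>j. [:comp p j, comp q j:]) G) k \<noteq> 0))"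

definition cond_a :: "nat \<Rightarrow> 'k::field mpoly \<Rightarrow> 'k vec3 \<Rightarrow> bool" where
  "cond_a d F l \<longleftrightarrow> l \<noteq> (0, 0, 0) \<and> 3 * line_mult l F > d"

definition cond_b :: "nat \<Rightarrow> 'k::field mpoly \<Rightarrow> 'k vec3 \<Rightarrow> bool" where
  "cond_b d F p \<longleftrightarrow> p \<noteq> (0, 0, 0) \<and> 3 * point_mult p F > 2 * d"

definition cond_c :: "nat \<Rightarrow> 'k::field mpoly \<Rightarrow> 'k vec3 \<Rightarrow> 'k vec3 \<Rightarrow> bool" where
  "cond_c d F l p \<longleftrightarrow> l \<noteq> (0, 0, 0) \<and> p \<noteq> (0, 0, 0) \<and> dot l p = 0 \<and>
     (\<exists>m G. m > 0 \<and> F = lin l ^ m * G \<and> \<not> lin l dvd G \<and>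
            subst id (comp p) G = 0 \<and> 2 * int_mult l p G + m > d)"

definition cond_d :: "nat \<Rightarrow> 'k::field mpoly \<Rightarrow> 'k vec3 \<Rightarrow> 'k vec3 \<Rightarrow> bool" where
  "cond_d d F l p \<longleftrightarrow> l \<noteq> (0, 0, 0) \<and> p \<noteq> (0, 0, 0) \<and> 2 * point_mult p F > d \<and>
     (\<exists>e. 2 * e > point_mult p F \<and> lin l ^ e dvd tangent_cone p F)"

end

theory Submission
  imports Defs
begin


definition mon :: "(nat \<Rightarrow> 'b::comm_ring_1) \<Rightarrow> (nat \<Rightarrow>\<^sub>0 nat) \<Rightarrow> 'b" where
  "mon \<sigma> n = (\<Prod>j\<in>Poly_Mapping.keys n. \<sigma> j ^ Poly_Mapping.lookup n j)"

definition hom :: "('k::comm_ring_1 \<Rightarrow> 'b::comm_ring_1) \<Rightarrow> bool" where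
  "hom phi \<longleftrightarrow> phi 0 = 0 \<and> phi 1 = 1 \<and> (\<forall>a b. phi (a + b) = phi a + phi b) \<and> (\<forall>a b. phi (a * b) = phi a * phi b)"

lemma mon_superset:
  assumes "finite A" "Poly_Mapping.keys n \<subseteq> A"
  shows "mon \<sigma> n = (\<Prod>j\<in>A. \<sigma> j ^ Poly_Mapping.lookup n j)"
  unfolding mon_def
  by (rule prod.mono_neutral_left) (use assms in \<open>auto simp: in_keys_iff\<close>)

lemma mon_add: "mon \<sigma> (a + b) = mon \<sigma> a * mon \<sigma> b"
proof -
  let ?A = "Poly_Mapping.keys a \<union> Poly_Mapping.keys b"
  have f: "finite ?A" by simp
  have k: "Poly_Mapping.keys (a + b) \<subseteq> ?A" by (rule keys_add)
  have ka: "Poly_Mapping.keys a \<subseteq> ?A" and kb: "Poly_Mapping.keys b \<subseteq> ?A" by auto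
  show ?thesis
    unfolding mon_superset[OF f k] mon_superset[OF f ka] mon_superset[OF f kb]
    by (auto simp: lookup_add power_add prod.distrib)
qed

lemma mon_zero [simp]: "mon \<sigma> 0 = 1"
  by (simp add: mon_def)

lemma subst_superset:
  assumes "hom phi" "finite A" "Poly_Mapping.keys F \<subseteq> A"
  shows "subst phi \<sigma> F = (\<Sum>n\<in>A. phi (Poly_Mapping.lookup F n) * mon \<sigma> n)"
  unfolding subst_def mon_def[symmetric]
  by (rule sum.mono_neutral_left) (use assms in \<open>auto simp: in_keys_iff hom_def\<close>)

lemma subst_add:
  assumes "hom phi"
  shows "subst phi \<sigma> (F + G) = subst phi \<sigma> F + subst phi \<sigma> G"
proof -
  let ?A = "Poly_Mapping.keys F \<union> Poly_Mapping.keys G"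
  have f: "finite ?A" by simp
  have k: "Poly_Mapping.keys (F + G) \<subseteq> ?A" by (rule keys_add)
  have ka: "Poly_Mapping.keys F \<subseteq> ?A" and kb: "Poly_Mapping.keys G \<subseteq> ?A" by auto
  show ?thesis
    unfolding subst_superset[OF assms f k] subst_superset[OF assms f ka] subst_superset[OF assms f kb]
    using assms by (auto simp: lookup_add hom_def distrib_right sum.distrib)
qed

lemma subst_zero [simp]: "subst phi \<sigma> 0 = 0"
  by (simp add: subst_def)

lemma subst_sum:
  assumes "hom phi"
  shows "subst phi \<sigma> (\<Sum>i\<in>I. f i) = (\<Sum>i\<in>I. subst phi \<sigma> (f i))"
  by (induction I rule: infinite_finite_induct) (auto simp: subst_add[OF assms])

lemma subst_single:
  assumes "hom phi"
  shows "subst phi \<sigma> (Poly_Mapping.single n c) = phi c * mon \<sigma> n"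
proof -
  have "subst phi \<sigma> (Poly_Mapping.single n c) = (\<Sum>m\<in>{n}. phi (Poly_Mapping.lookup (Poly_Mapping.single n c) m) * mon \<sigma> m)"
    by (rule subst_superset[OF assms]) auto
  then show ?thesis by simp
qed

lemma pm_expand: "F = (\<Sum>n\<in>Poly_Mapping.keys F. Poly_Mapping.single n (Poly_Mapping.lookup F n))"
proof (rule poly_mapping_eqI)
  fix k
  show "Poly_Mapping.lookup F k = Poly_Mapping.lookup (\<Sum>n\<in>Poly_Mapping.keys F. Poly_Mapping.single n (Poly_Mapping.lookup F n)) k"
    by (cases "k \<in> Poly_Mapping.keys F")
      (auto simp: lookup_sum lookup_single when_def in_keys_iff sum.delta)
qed

lemma subst_single_mult:
  assumes "hom phi"
  shows "subst phi \<sigma> (Poly_Mapping.single n c * G) = phi c * mon \<sigma> n * subst phi \<sigma> G"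
proof -
  have "Poly_Mapping.single n c * G = (\<Sum>m\<in>Poly_Mapping.keys G. Poly_Mapping.single n c * Poly_Mapping.single m (Poly_Mapping.lookup G m))"
    by (subst pm_expand[of G]) (simp add: sum_distrib_left)
  also have "\<dots> = (\<Sum>m\<in>Poly_Mapping.keys G. Poly_Mapping.single (n + m) (c * Poly_Mapping.lookup G m))"
    by (simp add: mult_single)
  finally have "subst phi \<sigma> (Poly_Mapping.single n c * G) = (\<Sum>m\<in>Poly_Mapping.keys G. phi c * phi (Poly_Mapping.lookup G m) * (mon \<sigma> n * mon \<sigma> m))"
    using assms by (simp add: subst_sum subst_single mon_add hom_def)
  also have "\<dots> = phi c * mon \<sigma> n * subst phi \<sigma> G"
    unfolding subst_def mon_def[symmetric] by (simp add: sum_distrib_left ac_simps)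
  finally show ?thesis .
qed

lemma subst_mult:
  assumes "hom phi"
  shows "subst phi \<sigma> (F * G) = subst phi \<sigma> F * subst phi \<sigma> G"
proof -
  have "F * G = (\<Sum>n\<in>Poly_Mapping.keys F. Poly_Mapping.single n (Poly_Mapping.lookup F n) * G)"
    by (subst pm_expand[of F]) (simp add: sum_distrib_right)
  then have "subst phi \<sigma> (F * G) = (\<Sum>n\<in>Poly_Mapping.keys F. phi (Poly_Mapping.lookup F n) * mon \<sigma> n * subst phi \<sigma> G)"
    using assms by (simp add: subst_sum subst_single_mult)
  also have "\<dots> = subst phi \<sigma> F * subst phi \<sigma> G"
    unfolding subst_def[of phi \<sigma> F] mon_def[symmetric] by (simp add: sum_distrib_right)
  finally show ?thesis .
qed

lemma subst_Const:
  assumes "hom phi"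
  shows "subst phi \<sigma> (Const c) = phi c"
  using subst_single[OF assms, of \<sigma> 0 c] by (simp add: Const_def)

lemma subst_one:
  assumes "hom phi"
  shows "subst phi \<sigma> 1 = 1"
  using subst_Const[OF assms, of \<sigma> 1] assms by (simp add: Const_def hom_def)

lemma subst_Var:
  assumes "hom phi"
  shows "subst phi \<sigma> (Var j) = \<sigma> j"
  using subst_single[OF assms, of \<sigma> "Poly_Mapping.single j 1" 1] assms
  by (simp add: Var_def hom_def mon_def)

lemma subst_power:
  assumes "hom phi"
  shows "subst phi \<sigma> (F ^ e) = subst phi \<sigma> F ^ e"
  by (induction e) (simp_all add: subst_one[OF assms] subst_mult[OF assms])

lemma subst_diff:
  assumes "hom phi"
  shows "subst phi \<sigma> (F - G) = subst phi \<sigma> F - subst phi \<sigma> G"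
  using subst_add[OF assms, of \<sigma> "F - G" G] by (simp add: algebra_simps)

lemma subst_prod:
  assumes "hom phi"
  shows "subst phi \<sigma> (\<Prod>i\<in>I. f i) = (\<Prod>i\<in>I. subst phi \<sigma> (f i))"
  by (induction I rule: infinite_finite_induct) (auto simp: subst_mult[OF assms] subst_one[OF assms])

lemma subst_cong:
  assumes "\<And>n j. n \<in> Poly_Mapping.keys F \<Longrightarrow> j \<in> Poly_Mapping.keys n \<Longrightarrow> \<sigma> j = \<tau> j"
  shows "subst phi \<sigma> F = subst phi \<tau> F"
  unfolding subst_def using assms by (auto intro!: sum.cong prod.cong)

lemma Const_add: "Const (a + b) = Const a + Const b"
  by (simp add: Const_def single_add)
lemma Const_mult: "Const (a * b) = Const a * Const b"
  by (simp add: Const_def mult_single)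
lemma Const_0 [simp]: "Const 0 = 0" by (simp add: Const_def)
lemma Const_1 [simp]: "Const 1 = 1" by (simp add: Const_def)

lemma hom_Const: "hom (Const :: 'k::comm_ring_1 \<Rightarrow> 'k mpoly)"
  by (simp add: hom_def Const_def single_add mult_single)

lemma hom_id: "hom id"
  by (simp add: hom_def)

lemma hom_pC: "hom (\<lambda>c. [:c:])"
  by (simp add: hom_def)

lemma hom_comp: "hom f \<Longrightarrow> hom g \<Longrightarrow> hom (g \<circ> f)"
  by (simp add: hom_def)

lemma hom_pConst: "hom (\<lambda>c. [:Const c:] :: 'k::comm_ring_1 mpoly poly)"
  by (simp add: hom_def Const_add Const_mult)


lemma subst_compose:
  assumes "hom phi"
  shows "subst phi \<sigma> (subst Const \<tau> F) = subst phi (\<lambda>j. subst phi \<sigma> (\<tau> j)) F"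
proof -
  have "subst phi \<sigma> (subst Const \<tau> F) = (\<Sum>n\<in>Poly_Mapping.keys F. phi (Poly_Mapping.lookup F n) * (\<Prod>j\<in>Poly_Mapping.keys n. subst phi \<sigma> (\<tau> j) ^ Poly_Mapping.lookup n j))"
    unfolding subst_def[of Const \<tau> F]
    by (simp add: subst_sum[OF assms] subst_mult[OF assms] subst_Const[OF assms] subst_prod[OF assms] subst_power[OF assms])
  then show ?thesis by (simp add: subst_def)
qed

lemma Var_power: "Var j ^ e = Poly_Mapping.single (Poly_Mapping.single j e) 1"
  by (induction e) (simp_all add: Var_def mult_single single_add[symmetric])

lemma prod_single: "(\<Prod>j\<in>A. Poly_Mapping.single (g j) (1::'k::comm_ring_1)) = Poly_Mapping.single (\<Sum>j\<in>A. g j) 1"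
  by (induction A rule: infinite_finite_induct) (auto simp: mult_single)

lemma single_as_mon: "Poly_Mapping.single n (1::'k::comm_ring_1) = mon Var n"
proof -
  have "mon Var n = (\<Prod>j\<in>Poly_Mapping.keys n. Poly_Mapping.single (Poly_Mapping.single j (Poly_Mapping.lookup n j)) (1::'k))"
    by (simp add: mon_def Var_power)
  also have "\<dots> = Poly_Mapping.single (\<Sum>j\<in>Poly_Mapping.keys n. Poly_Mapping.single j (Poly_Mapping.lookup n j)) 1"
    by (rule prod_single)
  also have "(\<Sum>j\<in>Poly_Mapping.keys n. Poly_Mapping.single j (Poly_Mapping.lookup n j)) = n"
    by (rule pm_expand[symmetric])
  finally show ?thesis by simp
qed

lemma subst_Var_id: "subst Const Var F = (F :: 'k::comm_ring_1 mpoly)"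
proof -
  have "subst Const Var F = (\<Sum>n\<in>Poly_Mapping.keys F. Const (Poly_Mapping.lookup F n) * Poly_Mapping.single n 1)"
    by (simp add: subst_def single_as_mon mon_def)
  also have "\<dots> = (\<Sum>n\<in>Poly_Mapping.keys F. Poly_Mapping.single n (Poly_Mapping.lookup F n))"
    by (simp add: Const_def mult_single)
  finally show ?thesis using pm_expand[of F] by simp
qed


definition row :: "'k coordsys \<Rightarrow> nat \<Rightarrow> 'k vec3" where
  "row E k = (case E of (u, v, w) \<Rightarrow> if k = 0 then u else if k = 1 then v else w)"

definition ent :: "'k coordsys \<Rightarrow> nat \<Rightarrow> nat \<Rightarrow> 'k" where
  "ent M k j = comp (row M k) j"

definition vlin :: "'k::comm_ring_1 vec3 \<Rightarrow> 'k coordsys \<Rightarrow> 'k vec3" where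
  "vlin v M = (comp v 0 * ent M 0 0 + comp v 1 * ent M 1 0 + comp v 2 * ent M 2 0,
               comp v 0 * ent M 0 1 + comp v 1 * ent M 1 1 + comp v 2 * ent M 2 1,
               comp v 0 * ent M 0 2 + comp v 1 * ent M 1 2 + comp v 2 * ent M 2 2)"

definition mmul :: "'k::comm_ring_1 coordsys \<Rightarrow> 'k coordsys \<Rightarrow> 'k coordsys" where
  "mmul N M = (vlin (row N 0) M, vlin (row N 1) M, vlin (row N 2) M)"

definition msub :: "'k::comm_ring_1 coordsys \<Rightarrow> 'k mpoly \<Rightarrow> 'k mpoly" where
  "msub M P = subst Const (\<lambda>k. if k < 3 then lin (row M k) else Var k) P"

definition I3 :: "'k::comm_ring_1 coordsys" where
  "I3 = ((1, 0, 0), (0, 1, 0), (0, 0, 1))"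

definition cross :: "'k::comm_ring_1 vec3 \<Rightarrow> 'k vec3 \<Rightarrow> 'k vec3" where
  "cross a b = (comp a 1 * comp b 2 - comp a 2 * comp b 1,
                comp a 2 * comp b 0 - comp a 0 * comp b 2,
                comp a 0 * comp b 1 - comp a 1 * comp b 0)"

definition madj :: "'k::comm_ring_1 coordsys \<Rightarrow> 'k coordsys" where
  "madj E = (case E of (u, v, w) \<Rightarrow>
     let c0 = cross v w; c1 = cross w u; c2 = cross u v in
     ((comp c0 0, comp c1 0, comp c2 0),
      (comp c0 1, comp c1 1, comp c2 1),
      (comp c0 2, comp c1 2, comp c2 2)))"

definition msc :: "'k::comm_ring_1 \<Rightarrow> 'k coordsys \<Rightarrow> 'k coordsys" where
  "msc c M = (case M of ((a0, a1, a2), (b0, b1, b2), (c0, c1, c2)) \<Rightarrow>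
     ((c * a0, c * a1, c * a2), (c * b0, c * b1, c * b2), (c * c0, c * c1, c * c2)))"

definition minv :: "'k::field coordsys \<Rightarrow> 'k coordsys" where
  "minv E = msc (inverse (det3 E)) (madj E)"

lemma comp_simps [simp]: "comp (a, b, c) 0 = a" "comp (a, b, c) (Suc 0) = b" "comp (a, b, c) 2 = c"
  by (simp_all add: comp_def)

lemma row_simps [simp]: "row (u, v, w) 0 = u" "row (u, v, w) (Suc 0) = v" "row (u, v, w) 2 = w"
  by (simp_all add: row_def)

lemma msub_add: "msub M (P + Q) = msub M P + msub M Q"
  by (simp add: msub_def subst_add[OF hom_Const])
lemma msub_mult: "msub M (P * Q) = msub M P * msub M Q"
  by (simp add: msub_def subst_mult[OF hom_Const])
lemma msub_Const: "msub M (Const c) = Const c"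
  by (simp add: msub_def subst_Const[OF hom_Const])
lemma msub_Var: "msub M (Var k) = (if k < 3 then lin (row M k) else Var k)"
  by (simp add: msub_def subst_Var[OF hom_Const])
lemma msub_power: "msub M (P ^ e) = msub M P ^ e"
  by (simp add: msub_def subst_power[OF hom_Const])
lemma msub_sum: "msub M (\<Sum>i\<in>I. f i) = (\<Sum>i\<in>I. msub M (f i))"
  by (simp add: msub_def subst_sum[OF hom_Const])
lemma msub_zero [simp]: "msub M 0 = 0"
  by (simp add: msub_def)
lemma msub_one [simp]: "msub M 1 = 1"
  by (simp add: msub_def subst_one[OF hom_Const])
lemma msub_diff: "msub M (P - Q) = msub M P - msub M Q"
  by (simp add: msub_def subst_diff[OF hom_Const])

lemma lin_expand: "lin (a, b, c) = Const a * Var 0 + Const b * Var 1 + Const c * Var 2"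
  by (simp add: lin_def)

lemma msub_lin: "msub M (lin v) = lin (vlin v M)"
proof -
  obtain a b c where v: "v = (a, b, c)" by (cases v) auto
  obtain r0 r1 r2 where M: "M = (r0, r1, r2)" by (cases M) auto
  obtain x0 x1 x2 where r0: "r0 = (x0, x1, x2)" by (cases r0) auto
  obtain y0 y1 y2 where r1: "r1 = (y0, y1, y2)" by (cases r1) auto
  obtain z0 z1 z2 where r2: "r2 = (z0, z1, z2)" by (cases r2) auto
  show ?thesis
    unfolding v M r0 r1 r2
    by (simp add: lin_expand msub_add msub_mult msub_Const msub_Var vlin_def ent_def
        Const_add Const_mult algebra_simps)
qed

lemma msub_msub: "msub M (msub N P) = msub (mmul N M) P"
proof -
  have "msub M (msub N P) = subst Const (\<lambda>k. msub M (if k < 3 then lin (row N k) else Var k)) P"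
    unfolding msub_def[of N] by (simp add: msub_def subst_compose[OF hom_Const])
  also have "(\<lambda>k. msub M (if k < 3 then lin (row N k) else Var k)) = (\<lambda>k. if k < 3 then lin (row (mmul N M) k) else Var k)"
  proof
    fix k :: nat
    show "msub M (if k < 3 then lin (row N k) else Var k) = (if k < 3 then lin (row (mmul N M) k) else Var k)"
      by (cases "k = 0"; cases "k = 1"; cases "k = 2")
        (auto simp: msub_lin msub_Var mmul_def row_def)
  qed
  finally show ?thesis by (simp add: msub_def)
qed

lemma msub_I3: "msub I3 P = P"
proof -
  have "(\<lambda>k. if k < 3 then lin (row I3 k) else Var k) = (Var :: nat \<Rightarrow> 'a mpoly)"
  proof
    fix k :: nat
    show "(if k < 3 then lin (row I3 k) else Var k) = (Var k :: 'a mpoly)"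
      by (cases "k = 0"; cases "k = 1"; cases "k = 2")
        (auto simp: I3_def row_def lin_expand)
  qed
  then show ?thesis by (simp add: msub_def subst_Var_id)
qed

lemma madj_right: "mmul E (madj E) = msc (det3 E) I3"
proof -
  obtain r0 r1 r2 where M: "E = (r0, r1, r2)" by (cases E) auto
  obtain x0 x1 x2 where r0: "r0 = (x0, x1, x2)" by (cases r0) auto
  obtain y0 y1 y2 where r1: "r1 = (y0, y1, y2)" by (cases r1) auto
  obtain z0 z1 z2 where r2: "r2 = (z0, z1, z2)" by (cases r2) auto
  show ?thesis unfolding M r0 r1 r2
    by (simp add: mmul_def madj_def vlin_def ent_def cross_def det3_def I3_def msc_def Let_def algebra_simps)
qed

lemma madj_left: "mmul (madj E) E = msc (det3 E) I3"
proof -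
  obtain r0 r1 r2 where M: "E = (r0, r1, r2)" by (cases E) auto
  obtain x0 x1 x2 where r0: "r0 = (x0, x1, x2)" by (cases r0) auto
  obtain y0 y1 y2 where r1: "r1 = (y0, y1, y2)" by (cases r1) auto
  obtain z0 z1 z2 where r2: "r2 = (z0, z1, z2)" by (cases r2) auto
  show ?thesis unfolding M r0 r1 r2
    by (simp add: mmul_def madj_def vlin_def ent_def cross_def det3_def I3_def msc_def Let_def algebra_simps)
qed

lemma mmul_msc_right: "mmul N (msc c M) = msc c (mmul N M)"
proof -
  obtain r0 r1 r2 where M: "M = (r0, r1, r2)" by (cases M) auto
  obtain x0 x1 x2 where r0: "r0 = (x0, x1, x2)" by (cases r0) auto
  obtain y0 y1 y2 where r1: "r1 = (y0, y1, y2)" by (cases r1) auto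
  obtain z0 z1 z2 where r2: "r2 = (z0, z1, z2)" by (cases r2) auto
  show ?thesis unfolding M r0 r1 r2
    by (simp add: mmul_def vlin_def ent_def msc_def row_def split: prod.split) (simp add: algebra_simps)
qed

lemma mmul_msc_left: "mmul (msc c N) M = msc c (mmul N M)"
proof -
  obtain r0 r1 r2 where M: "N = (r0, r1, r2)" by (cases N) auto
  obtain x0 x1 x2 where r0: "r0 = (x0, x1, x2)" by (cases r0) auto
  obtain y0 y1 y2 where r1: "r1 = (y0, y1, y2)" by (cases r1) auto
  obtain z0 z1 z2 where r2: "r2 = (z0, z1, z2)" by (cases r2) auto
  show ?thesis unfolding M r0 r1 r2
    by (simp add: mmul_def vlin_def ent_def msc_def row_def split: prod.split) (simp add: algebra_simps)
qed

lemma msc_msc_I3: "(c::'k::field) \<noteq> 0 \<Longrightarrow> msc (inverse c) (msc c I3) = I3"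
  by (simp add: msc_def I3_def)

lemma minv_right:
  fixes E :: "'k::field coordsys"
  assumes "det3 E \<noteq> 0"
  shows "mmul E (minv E) = I3"
  using assms by (simp add: minv_def mmul_msc_right madj_right msc_msc_I3)

lemma minv_left:
  fixes E :: "'k::field coordsys"
  assumes "det3 E \<noteq> 0"
  shows "mmul (minv E) E = I3"
  using assms by (simp add: minv_def mmul_msc_left madj_left msc_msc_I3)


definition lf :: "(nat \<Rightarrow> int) \<Rightarrow> (nat \<Rightarrow>\<^sub>0 nat) \<Rightarrow> int" where
  "lf f n = (\<Sum>j\<in>Poly_Mapping.keys n. f j * int (Poly_Mapping.lookup n j))"

definition LB :: "((nat \<Rightarrow>\<^sub>0 nat) \<Rightarrow> int) \<Rightarrow> int \<Rightarrow> 'k::comm_ring_1 mpoly \<Rightarrow> bool" where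
  "LB g c P \<longleftrightarrow> (\<forall>n\<in>Poly_Mapping.keys P. c \<le> g n)"

lemma lf_superset:
  assumes "finite A" "Poly_Mapping.keys n \<subseteq> A"
  shows "lf f n = (\<Sum>j\<in>A. f j * int (Poly_Mapping.lookup n j))"
  unfolding lf_def by (rule sum.mono_neutral_left) (use assms in \<open>auto simp: in_keys_iff\<close>)

lemma lf_add: "lf f (a + b) = lf f a + lf f b"
proof -
  let ?A = "Poly_Mapping.keys a \<union> Poly_Mapping.keys b"
  have f: "finite ?A" by simp
  have k: "Poly_Mapping.keys (a + b) \<subseteq> ?A" by (rule keys_add)
  have ka: "Poly_Mapping.keys a \<subseteq> ?A" and kb: "Poly_Mapping.keys b \<subseteq> ?A" by auto
  show ?thesis
    unfolding lf_superset[OF f k] lf_superset[OF f ka] lf_superset[OF f kb]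
    by (simp add: lookup_add sum.distrib algebra_simps)
qed

lemma lf_zero [simp]: "lf f 0 = 0" by (simp add: lf_def)

lemma lf_single [simp]: "lf f (Poly_Mapping.single j e) = f j * int e"
  by (cases "e = 0") (simp_all add: lf_def)

lemma LB_zero [simp]: "LB g c 0" by (simp add: LB_def)

lemma LB_Const: "LB (lf f) 0 (Const c)"
  by (simp add: LB_def Const_def)

lemma LB_one: "LB (lf f) 0 1"
  by (simp add: LB_def)

lemma LB_mono: "a \<le> b \<Longrightarrow> LB g b P \<Longrightarrow> LB g a P"
  by (auto simp: LB_def)

lemma LB_add: "LB g c P \<Longrightarrow> LB g c Q \<Longrightarrow> LB g c (P + Q)"
  using keys_add[of P Q] by (auto simp: LB_def)

lemma LB_sum: "(\<And>i. i \<in> I \<Longrightarrow> LB g c (h i)) \<Longrightarrow> LB g c (\<Sum>i\<in>I. h i)"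
  by (induction I rule: infinite_finite_induct) (auto intro: LB_add)

lemma LB_mult: "LB (lf f) a P \<Longrightarrow> LB (lf f) b Q \<Longrightarrow> LB (lf f) (a + b) (P * Q)"
  using keys_mult[of P Q] by (fastforce simp: LB_def lf_add intro: add_mono)

lemma LB_power: "LB (lf f) a P \<Longrightarrow> LB (lf f) (int e * a) (P ^ e)"
proof (induction e)
  case 0 then show ?case by (simp add: LB_one)
next
  case (Suc e)
  then have "LB (lf f) (a + int e * a) (P * P ^ e)" by (intro LB_mult) auto
  then show ?case by (simp add: algebra_simps)
qed

lemma LB_prod: "(\<And>i. i \<in> I \<Longrightarrow> LB (lf f) (a i) (h i)) \<Longrightarrow> LB (lf f) (\<Sum>i\<in>I. a i) (\<Prod>i\<in>I. h i)"
proof (induction I rule: infinite_finite_induct)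
  case (infinite A) then show ?case by (simp add: LB_one)
next
  case empty then show ?case by (simp add: LB_one)
next
  case (insert x F) then show ?case by (simp add: LB_mult)
qed

lemma subst_LB:
  assumes s: "\<And>j. LB (lf f) (f j) (\<sigma> j)" and P: "LB (lf f) a P"
  shows "LB (lf f) a (subst Const \<sigma> P)"
  unfolding subst_def
proof (rule LB_sum)
  fix n assume n: "n \<in> Poly_Mapping.keys P"
  have "LB (lf f) (\<Sum>j\<in>Poly_Mapping.keys n. int (Poly_Mapping.lookup n j) * f j)
      (\<Prod>j\<in>Poly_Mapping.keys n. \<sigma> j ^ Poly_Mapping.lookup n j)"
    by (rule LB_prod) (rule LB_power[OF s])
  then have "LB (lf f) (lf f n) (\<Prod>j\<in>Poly_Mapping.keys n. \<sigma> j ^ Poly_Mapping.lookup n j)"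
    by (simp add: lf_def mult.commute)
  then have "LB (lf f) (0 + lf f n) (Const (Poly_Mapping.lookup P n) * (\<Prod>j\<in>Poly_Mapping.keys n. \<sigma> j ^ Poly_Mapping.lookup n j))"
    by (intro LB_mult LB_Const)
  then show "LB (lf f) a (Const (Poly_Mapping.lookup P n) * (\<Prod>j\<in>Poly_Mapping.keys n. \<sigma> j ^ Poly_Mapping.lookup n j))"
    using P n by (force simp: LB_def)
qed

lemma LB_Var: "LB (lf f) (f j) (Var j)"
  by (simp add: LB_def Var_def)

lemma LB_lin:
  assumes "c \<le> f 0" "c \<le> f 1" "c \<le> f 2"
  shows "LB (lf f) c (lin v)"
proof -
  have "LB (lf f) (0 + f k) (Const a * Var k)" for a k by (intro LB_mult LB_Const LB_Var)
  then have "LB (lf f) c (Const a * Var k)" if "c \<le> f k" for a k using that by (auto intro: LB_mono)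
  then show ?thesis unfolding lin_def using assms by (intro LB_add) auto
qed

lemma msub_LB:
  assumes "f 0 = f 1" "f 1 = f 2" "LB (lf f) a P"
  shows "LB (lf f) a (msub M P)"
  unfolding msub_def
proof (rule subst_LB[OF _ assms(3)])
  fix j
  show "LB (lf f) (f j) (if j < 3 then lin (row M j) else Var j)"
  proof (cases "j < 3")
    case True
    then have "j = 0 \<or> j = 1 \<or> j = 2" by auto
    then have "f j = f 0" using assms by (auto simp: numeral_2_eq_2)
    then show ?thesis using True assms by (auto intro!: LB_lin)
  qed (simp add: LB_Var)
qed

definition out3 :: "nat \<Rightarrow> int" where "out3 j = (if j < 3 then 0 else -1)"

definition hf :: "nat \<Rightarrow> 'k::comm_ring_1 mpoly \<Rightarrow> bool" where
  "hf d P \<longleftrightarrow> LB (lf (\<lambda>_. 1)) (int d) P \<and> LB (lf (\<lambda>_. -1)) (- int d) P \<and> LB (lf out3) 0 P"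

lemma msub_hf: "hf d P \<Longrightarrow> hf d (msub M P)"
  unfolding hf_def by (auto intro!: msub_LB simp: out3_def)

definition mnm :: "nat \<times> nat \<times> nat \<Rightarrow> (nat \<Rightarrow>\<^sub>0 nat)" where
  "mnm i = (case i of (i0, i1, i2) \<Rightarrow> Poly_Mapping.single 0 i0 + Poly_Mapping.single 1 i1 + Poly_Mapping.single 2 i2)"

lemma lookup_mono:
  "Poly_Mapping.lookup (mnm (i0, i1, i2)) j = (if j = 0 then i0 else if j = 1 then i1 else if j = 2 then i2 else 0)"
  by (auto simp: mnm_def lookup_add lookup_single)

lemma mono_inj: "mnm i = mnm i' \<Longrightarrow> i = i'"
proof -
  assume a: "mnm i = mnm i'"
  obtain a0 a1 a2 where i: "i = (a0, a1, a2)" by (cases i) auto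
  obtain b0 b1 b2 where i': "i' = (b0, b1, b2)" by (cases i') auto
  have "Poly_Mapping.lookup (mnm i) j = Poly_Mapping.lookup (mnm i') j" for j using a by simp
  from this[of 0] this[of 1] this[of 2] show ?thesis unfolding i i' lookup_mono by simp
qed

lemma keys_mono: "Poly_Mapping.keys (mnm i) \<subseteq> {0, 1, 2}"
proof -
  obtain a0 a1 a2 where i: "i = (a0, a1, a2)" by (cases i) auto
  show ?thesis unfolding i by (auto simp: in_keys_iff lookup_mono split: if_splits)
qed

lemma lf_012:
  assumes "Poly_Mapping.keys n \<subseteq> {0, 1, 2}"
  shows "lf f n = f 0 * int (Poly_Mapping.lookup n 0) + f 1 * int (Poly_Mapping.lookup n 1) + f 2 * int (Poly_Mapping.lookup n 2)"
  by (subst lf_superset[OF _ assms]) auto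

lemma lf_mono: "lf f (mnm (i0, i1, i2)) = f 0 * int i0 + f 1 * int i1 + f 2 * int i2"
  by (subst lf_012[OF keys_mono]) (simp add: lookup_mono)

lemma mono_of: "Poly_Mapping.keys n \<subseteq> {0, 1, 2} \<Longrightarrow> n = mnm (Poly_Mapping.lookup n 0, Poly_Mapping.lookup n 1, Poly_Mapping.lookup n 2)"
  by (rule poly_mapping_eqI) (auto simp: lookup_mono in_keys_iff)

lemma out3_keys:
  assumes "0 \<le> lf out3 n"
  shows "Poly_Mapping.keys n \<subseteq> {0, 1, 2}"
proof
  fix j assume j: "j \<in> Poly_Mapping.keys n"
  show "j \<in> {0, 1, 2}"
  proof (rule ccontr)
    assume "j \<notin> {0, 1, 2}"
    then have "out3 j * int (Poly_Mapping.lookup n j) < 0" using j by (auto simp: out3_def in_keys_iff)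
    moreover have "lf out3 n = out3 j * int (Poly_Mapping.lookup n j) + (\<Sum>i\<in>Poly_Mapping.keys n - {j}. out3 i * int (Poly_Mapping.lookup n i))"
      unfolding lf_def using j by (simp add: sum.remove)
    moreover have "(\<Sum>i\<in>Poly_Mapping.keys n - {j}. out3 i * int (Poly_Mapping.lookup n i)) \<le> 0"
      by (rule sum_nonpos) (auto simp: out3_def mult_nonpos_nonneg)
    ultimately show False using assms by linarith
  qed
qed

lemma hf_keys:
  assumes "hf d P" "n \<in> Poly_Mapping.keys P"
  shows "\<exists>i\<in>exps d. n = mnm i"
proof -
  have k: "Poly_Mapping.keys n \<subseteq> {0, 1, 2}" using assms out3_keys by (auto simp: hf_def LB_def)
  have "lf (\<lambda>_. 1) n = int d" using assms by (force simp: hf_def LB_def lf_def sum_negf)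
  then have "Poly_Mapping.lookup n 0 + Poly_Mapping.lookup n 1 + Poly_Mapping.lookup n 2 = d"
    by (simp add: lf_012[OF k])
  then show ?thesis using mono_of[OF k] by (auto simp: exps_def)
qed

lemma is_form_hf: "is_form d F \<Longrightarrow> hf d F"
  unfolding is_form_def hf_def LB_def
  by (auto simp: lf_012 out3_def)

lemma exps_finite: "finite (exps d)"
proof -
  have "exps d \<subseteq> {0..d} \<times> {0..d} \<times> {0..d}" by (auto simp: exps_def)
  then show ?thesis by (rule finite_subset) auto
qed

definition Xm :: "nat \<times> nat \<times> nat \<Rightarrow> 'k::comm_ring_1 mpoly" where
  "Xm i = Poly_Mapping.single (mnm i) 1"

lemma Xm_Var: "Xm (i0, i1, i2) = Var 0 ^ i0 * Var 1 ^ i1 * Var 2 ^ i2"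
  by (simp add: Xm_def Var_power mult_single mnm_def)

lemma emono_msub: "emono E i = msub E (Xm i)"
proof -
  obtain a0 a1 a2 where i: "i = (a0, a1, a2)" by (cases i) auto
  obtain u v w where E: "E = (u, v, w)" by (cases E) auto
  show ?thesis unfolding i E by (simp add: emono_def Xm_Var msub_mult msub_power msub_Var)
qed

lemma hf_expand:
  assumes "hf d P"
  shows "P = (\<Sum>i\<in>exps d. Const (Poly_Mapping.lookup P (mnm i)) * Xm i)"
proof -
  have "(\<Sum>i\<in>exps d. Const (Poly_Mapping.lookup P (mnm i)) * Xm i) = (\<Sum>i\<in>exps d. Poly_Mapping.single (mnm i) (Poly_Mapping.lookup P (mnm i)))"
    by (simp add: Xm_def Const_def mult_single)
  also have "\<dots> = (\<Sum>n\<in>mnm ` exps d. Poly_Mapping.single n (Poly_Mapping.lookup P n))"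
    by (subst sum.reindex) (auto intro: inj_onI mono_inj)
  also have "\<dots> = (\<Sum>n\<in>Poly_Mapping.keys P. Poly_Mapping.single n (Poly_Mapping.lookup P n))"
    using hf_keys[OF assms] exps_finite by (intro sum.mono_neutral_right) (auto simp: in_keys_iff)
  finally show ?thesis using pm_expand[of P] by simp
qed

definition Fp :: "'k::field coordsys \<Rightarrow> 'k mpoly \<Rightarrow> 'k mpoly" where
  "Fp E P = msub (minv E) P"

lemma T_Fp: "coord_sys E \<Longrightarrow> msub E (Fp E P) = P"
  by (simp add: Fp_def coord_sys_def msub_msub minv_left msub_I3)

lemma Fp_T: "coord_sys E \<Longrightarrow> Fp E (msub E P) = P"
  by (simp add: Fp_def coord_sys_def msub_msub minv_right msub_I3)

lemma lookup_sum_Xm: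
  assumes "j \<in> exps d"
  shows "Poly_Mapping.lookup (\<Sum>i\<in>exps d. Const (a i) * Xm i) (mnm j) = a j"
proof -
  have "Poly_Mapping.lookup (\<Sum>i\<in>exps d. Const (a i) * Xm i) (mnm j) = (\<Sum>i\<in>exps d. if i = j then a i else 0)"
    unfolding lookup_sum
    by (intro sum.cong refl) (auto simp: Xm_def Const_def mult_single lookup_single when_def dest: mono_inj)
  then show ?thesis using assms exps_finite by simp
qed

lemma coeffs_in_char:
  fixes F :: "'k::field mpoly"
  assumes E: "coord_sys E" and F: "is_form d F"
  shows "coeffs_in d E F = (\<lambda>i. if i \<in> exps d then Poly_Mapping.lookup (Fp E F) (mnm i) else 0)"
  unfolding coeffs_in_def
proof (rule the_equality)
  let ?c = "(\<lambda>i. if i \<in> exps d then Poly_Mapping.lookup (Fp E F) (mnm i) else 0)"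
  have hf: "hf d (Fp E F)" unfolding Fp_def by (rule msub_hf[OF is_form_hf[OF F]])
  have "F = msub E (Fp E F)" using T_Fp[OF E] by simp
  also have "\<dots> = msub E (\<Sum>i\<in>exps d. Const (Poly_Mapping.lookup (Fp E F) (mnm i)) * Xm i)"
    using hf_expand[OF hf] by simp
  also have "\<dots> = (\<Sum>i\<in>exps d. Const (?c i) * emono E i)"
    by (simp add: msub_sum msub_mult msub_Const emono_msub)
  finally show "(\<forall>i. ?c i \<noteq> 0 \<longrightarrow> i \<in> exps d) \<and> F = (\<Sum>i\<in>exps d. Const (?c i) * emono E i)"
    by auto
next
  fix a
  assume a: "(\<forall>i. a i \<noteq> 0 \<longrightarrow> i \<in> exps d) \<and> F = (\<Sum>i\<in>exps d. Const (a i) * emono E i)"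
  have fp: "Fp E F = (\<Sum>i\<in>exps d. Const (a i) * Xm i)"
    using a by (simp add: emono_msub Fp_def msub_sum msub_mult msub_Const) (metis Fp_T[OF E] Fp_def)
  show "a = (\<lambda>i. if i \<in> exps d then Poly_Mapping.lookup (Fp E F) (mnm i) else 0)"
  proof
    fix i show "a i = (if i \<in> exps d then Poly_Mapping.lookup (Fp E F) (mnm i) else 0)"
    proof (cases "i \<in> exps d")
      case True then show ?thesis unfolding fp using lookup_sum_Xm[where a=a, OF True] by simp
    next
      case False then show ?thesis using a by metis
    qed
  qed
qed


definition e0 :: "nat \<times> nat \<times> nat \<Rightarrow> nat" where "e0 i = fst i"
definition e1 :: "nat \<times> nat \<times> nat \<Rightarrow> nat" where "e1 i = fst (snd i)"
definition e2 :: "nat \<times> nat \<times> nat \<Rightarrow> nat" where "e2 i = snd (snd i)"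

lemma e_simps [simp]: "e0 (a, b, c) = a" "e1 (a, b, c) = b" "e2 (a, b, c) = c"
  by (simp_all add: e0_def e1_def e2_def)

lemma subst_lin:
  assumes "hom phi"
  shows "subst phi \<sigma> (lin v) = phi (comp v 0) * \<sigma> 0 + phi (comp v 1) * \<sigma> 1 + phi (comp v 2) * \<sigma> 2"
  by (simp add: lin_def subst_add[OF assms] subst_mult[OF assms] subst_Const[OF assms] subst_Var[OF assms])

lemma msub_Xm: "msub E (Xm i) = lin (row E 0) ^ e0 i * lin (row E 1) ^ e1 i * lin (row E 2) ^ e2 i"
proof -
  obtain a b c where i: "i = (a, b, c)" by (cases i) auto
  show ?thesis unfolding i by (simp add: Xm_Var msub_mult msub_power msub_Var)
qed

lemma eval_coords:
  assumes "hom phi"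
  shows "subst phi \<sigma> (msub E (\<Sum>i\<in>S. Const (b i) * Xm (h i))) =
    (\<Sum>i\<in>S. phi (b i) * subst phi \<sigma> (lin (row E 0)) ^ e0 (h i) * subst phi \<sigma> (lin (row E 1)) ^ e1 (h i)
       * subst phi \<sigma> (lin (row E 2)) ^ e2 (h i))"
  by (simp add: msub_sum msub_mult msub_Const msub_Xm subst_sum[OF assms] subst_mult[OF assms]
      subst_Const[OF assms] subst_power[OF assms] mult.assoc)

lemma pCons0_power: "[:0, a:] ^ m = monom (a ^ m) m"
proof -
  have "[:0, a:] = monom a 1" by (simp add: monom_Suc monom_0)
  then show ?thesis by (simp add: monom_power)
qed

lemma coeff_sum3:
  "coeff (\<Sum>i\<in>S. [:b i:] * [:0, a0:] ^ f0 i * [:0, a1:] ^ f1 i * [:c, a2:] ^ f2 i) k =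
   (\<Sum>i\<in>S. if f0 i + f1 i \<le> k then b i * a0 ^ f0 i * a1 ^ f1 i * coeff ([:c, a2:] ^ f2 i) (k - (f0 i + f1 i)) else 0)"
proof -
  have "[:b i:] * [:0, a0:] ^ f0 i * [:0, a1:] ^ f1 i * [:c, a2:] ^ f2 i
     = monom (b i * a0 ^ f0 i * a1 ^ f1 i) (f0 i + f1 i) * [:c, a2:] ^ f2 i" for i
  proof -
    have "[:b i:] = monom (b i) 0" by (simp add: monom_0)
    then show ?thesis unfolding pCons0_power by (simp only: mult_monom add_0_left)
  qed
  then show ?thesis
    by (simp only: coeff_sum coeff_monom_mult) (auto intro!: sum.cong)
qed

lemma coeff_pC_power0: "coeff ([:c, a:] ^ m) 0 = c ^ m"
  by (simp add: coeff_0_power)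

lemma Var_dvd_keys:
  fixes P :: "'k::comm_ring_1 mpoly"
  assumes "Var k ^ e dvd P"
  shows "\<forall>n\<in>Poly_Mapping.keys P. e \<le> Poly_Mapping.lookup n k"
proof
  fix n assume n: "n \<in> Poly_Mapping.keys P"
  obtain G where P: "P = Var k ^ e * G" using assms by (auto elim: dvdE)
  have "n \<in> {a + b |a b. a \<in> Poly_Mapping.keys (Var k ^ e :: 'k mpoly) \<and> b \<in> Poly_Mapping.keys G}"
    by (rule subsetD[OF keys_mult]) (use n P in simp)
  moreover have "Poly_Mapping.keys (Var k ^ e :: 'k mpoly) = {Poly_Mapping.single k e}"
    by (simp add: Var_power)
  ultimately obtain a b where "n = a + b" "a = Poly_Mapping.single k e"
    by blast
  then show "e \<le> Poly_Mapping.lookup n k" by (simp add: lookup_add)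
qed

lemma Xm_shift0: "e \<le> a \<Longrightarrow> Xm (a, b, c) = Var 0 ^ e * Xm (a - e, b, c)"
proof -
  assume "e \<le> a"
  then have "Var 0 ^ a = Var 0 ^ e * (Var 0 ^ (a - e) :: 'k::comm_ring_1 mpoly)"
    by (simp add: power_add[symmetric])
  then show ?thesis unfolding Xm_Var by (subst \<open>Var 0 ^ a = _\<close>) (simp only: mult.assoc)
qed

lemma lin_scale: "lin (c * comp v 0, c * comp v 1, c * comp v 2) = Const c * lin v"
  by (simp add: lin_def Const_mult algebra_simps)

lemma Const_unit:
  fixes c :: "'k::field"
  assumes "c \<noteq> 0"
  shows "Const c * Const (inverse c) = 1"
  using assms by (simp add: Const_mult[symmetric])

lemma dvd_scale:
  fixes c :: "'k::field"
  assumes "c \<noteq> 0"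
  shows "(Const c * P) ^ e dvd F \<longleftrightarrow> P ^ e dvd F"
proof
  assume "(Const c * P) ^ e dvd F"
  then have "Const c ^ e * P ^ e dvd F" by (simp only: power_mult_distrib)
  then show "P ^ e dvd F" by (rule dvd_mult_right)
next
  assume a: "P ^ e dvd F"
  have "(Const c * P) ^ e * Const (inverse c) ^ e = (Const c * P * Const (inverse c)) ^ e"
    by (simp only: power_mult_distrib)
  also have "\<dots> = (P * (Const c * Const (inverse c))) ^ e"
    by (simp only: ac_simps)
  also have "\<dots> = P ^ e" using Const_unit[OF assms(1)] by simp
  finally have "P ^ e = (Const c * P) ^ e * Const (inverse c) ^ e" by simp
  then have "(Const c * P) ^ e dvd P ^ e" by (rule dvdI)
  then show "(Const c * P) ^ e dvd F" using a by (rule dvd_trans)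
qed

lemma Fp_lin0: "coord_sys E \<Longrightarrow> Fp E (lin (row E 0)) = Var 0"
  using Fp_T[of E "Var 0"] by (simp add: msub_Var)


lemma Const_power: "Const (c ^ m) = Const c ^ m"
  by (induction m) (simp_all add: Const_mult)

definition cf :: "'k::field coordsys \<Rightarrow> 'k mpoly \<Rightarrow> nat \<times> nat \<times> nat \<Rightarrow> 'k" where
  "cf E F i = Poly_Mapping.lookup (Fp E F) (mnm i)"

lemma support_char:
  assumes "coord_sys E" "is_form d F"
  shows "support_in d E F = {i \<in> exps d. cf E F i \<noteq> 0}"
  using coeffs_in_char[OF assms] by (auto simp: support_in_def cf_def)

lemma hf_Fp: "is_form d F \<Longrightarrow> hf d (Fp E F)"
  unfolding Fp_def by (rule msub_hf[OF is_form_hf])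

lemma keys_Fp:
  assumes "coord_sys E" "is_form d F"
  shows "Poly_Mapping.keys (Fp E F) = mnm ` support_in d E F"
proof
  show "Poly_Mapping.keys (Fp E F) \<subseteq> mnm ` support_in d E F"
  proof
    fix n assume n: "n \<in> Poly_Mapping.keys (Fp E F)"
    then obtain i where "i \<in> exps d" "n = mnm i" using hf_keys[OF hf_Fp[OF assms(2)]] by blast
    then show "n \<in> mnm ` support_in d E F" using n by (auto simp: support_char[OF assms] cf_def in_keys_iff)
  qed
  show "mnm ` support_in d E F \<subseteq> Poly_Mapping.keys (Fp E F)"
    by (auto simp: support_char[OF assms] cf_def in_keys_iff)
qed

lemma lookup_sum_Xm_gen:
  assumes "inj_on h T" "j \<in> T" "finite T"
  shows "Poly_Mapping.lookup (\<Sum>i\<in>T. Const (b i) * Xm (h i)) (mnm (h j)) = b j"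
proof -
  have "Poly_Mapping.lookup (\<Sum>i\<in>T. Const (b i) * Xm (h i)) (mnm (h j)) = (\<Sum>i\<in>T. if i = j then b i else 0)"
    unfolding lookup_sum
  proof (intro sum.cong refl)
    fix i assume i: "i \<in> T"
    have "mnm (h i) = mnm (h j) \<longleftrightarrow> i = j" using assms(1) i assms(2) by (auto dest: mono_inj inj_onD)
    then show "Poly_Mapping.lookup (Const (b i) * Xm (h i)) (mnm (h j)) = (if i = j then b i else 0)"
      by (auto simp: Xm_def Const_def mult_single lookup_single when_def)
  qed
  then show ?thesis using assms by simp
qed

lemma Fp_expand:
  assumes "coord_sys E" "is_form d F"
  shows "Fp E F = (\<Sum>i\<in>support_in d E F. Const (cf E F i) * Xm i)"
proof -
  have "Fp E F = (\<Sum>i\<in>exps d. Const (cf E F i) * Xm i)"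
    using hf_expand[OF hf_Fp[OF assms(2)]] by (simp add: cf_def)
  also have "\<dots> = (\<Sum>i\<in>support_in d E F. Const (cf E F i) * Xm i)"
    using exps_finite by (intro sum.mono_neutral_right) (auto simp: support_char[OF assms])
  finally show ?thesis .
qed

lemma F_expand:
  assumes "coord_sys E" "is_form d F"
  shows "F = msub E (\<Sum>i\<in>support_in d E F. Const (cf E F i) * Xm i)"
  using Fp_expand[OF assms] T_Fp[OF assms(1), of F] by simp

lemma support_finite: "finite (support_in d E F)"
  using exps_finite by (auto simp: support_in_def)

lemma support_nonempty:
  fixes F :: "'k::field mpoly"
  assumes "coord_sys E" "is_form d F"
  shows "support_in d E F \<noteq> {}"
proof
  assume "support_in d E F = {}"
  then have "F = 0" using F_expand[OF assms] by simp
  then show False using assms(2) by (simp add: is_form_def)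
qed

lemma support_exps: "i \<in> support_in d E F \<Longrightarrow> e0 i + e1 i + e2 i = d"
  by (cases i) (auto simp: support_in_def exps_def)

lemma Fp_mult: "Fp E (P * Q) = Fp E P * Fp E Q"
  by (simp add: Fp_def msub_mult)
lemma Fp_power: "Fp E (P ^ k) = Fp E P ^ k"
  by (simp add: Fp_def msub_power)

lemma lin_dvd_iff_Var:
  assumes E: "coord_sys E"
  shows "lin (row E 0) ^ e dvd F \<longleftrightarrow> Var 0 ^ e dvd Fp E F"
proof
  assume "lin (row E 0) ^ e dvd F"
  then obtain G where "F = lin (row E 0) ^ e * G" by (auto elim: dvdE)
  then have "Fp E F = Var 0 ^ e * Fp E G" by (simp add: Fp_mult Fp_power Fp_lin0[OF E])
  then show "Var 0 ^ e dvd Fp E F" by (rule dvdI)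
next
  assume "Var 0 ^ e dvd Fp E F"
  then obtain H where "Fp E F = Var 0 ^ e * H" by (auto elim: dvdE)
  then have "msub E (Fp E F) = lin (row E 0) ^ e * msub E H" by (simp add: msub_mult msub_power msub_Var)
  then have "F = lin (row E 0) ^ e * msub E H" using T_Fp[OF E] by simp
  then show "lin (row E 0) ^ e dvd F" by (rule dvdI)
qed

lemma Var0_dvd_iff:
  assumes E: "coord_sys E" and F: "is_form d F"
  shows "Var 0 ^ e dvd Fp E F \<longleftrightarrow> (\<forall>i\<in>support_in d E F. e \<le> e0 i)"
proof
  assume "Var 0 ^ e dvd Fp E F"
  from Var_dvd_keys[OF this] show "\<forall>i\<in>support_in d E F. e \<le> e0 i"
    unfolding keys_Fp[OF E F] by (auto simp: lookup_mono e0_def split: prod.splits)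
next
  assume a: "\<forall>i\<in>support_in d E F. e \<le> e0 i"
  have "Fp E F = (\<Sum>i\<in>support_in d E F. Const (cf E F i) * (Var 0 ^ e * Xm (e0 i - e, e1 i, e2 i)))"
    unfolding Fp_expand[OF E F]
  proof (intro sum.cong refl)
    fix i assume "i \<in> support_in d E F"
    then have "e \<le> e0 i" using a by auto
    then show "Const (cf E F i) * Xm i = Const (cf E F i) * (Var 0 ^ e * Xm (e0 i - e, e1 i, e2 i))"
      by (cases i) (simp add: Xm_shift0)
  qed
  also have "\<dots> = Var 0 ^ e * (\<Sum>i\<in>support_in d E F. Const (cf E F i) * Xm (e0 i - e, e1 i, e2 i))"
    by (simp add: sum_distrib_left ac_simps)
  finally show "Var 0 ^ e dvd Fp E F" by (rule dvdI)
qed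

definition propto :: "'k::field vec3 \<Rightarrow> 'k vec3 \<Rightarrow> bool" where
  "propto u v \<longleftrightarrow> proportional u v"

lemma prop_lin:
  assumes "proportional u v"
  shows "\<exists>c. c \<noteq> 0 \<and> lin u = Const c * lin v"
proof -
  obtain c where c: "c \<noteq> 0" "u = (c * comp v 0, c * comp v 1, c * comp v 2)" using assms by (auto simp: proportional_def)
  then show ?thesis using lin_scale[of c v] by auto
qed

lemma line_dvd_iff:
  assumes E: "coord_sys E" and F: "is_form d F" and p: "proportional (row E 0) l"
  shows "lin l ^ e dvd F \<longleftrightarrow> (\<forall>i\<in>support_in d E F. e \<le> e0 i)"
proof -
  obtain c where c: "c \<noteq> 0" "lin (row E 0) = Const c * lin l" using prop_lin[OF p] by blast
  have "lin l ^ e dvd F \<longleftrightarrow> lin (row E 0) ^ e dvd F" using dvd_scale[OF c(1)] c(2) by simp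
  then show ?thesis using lin_dvd_iff_Var[OF E] Var0_dvd_iff[OF E F] by simp
qed

lemma line_mult_char:
  assumes E: "coord_sys E" and F: "is_form d F" and p: "proportional (row E 0) l"
  shows "line_mult l F = Min (e0 ` support_in d E F)"
  unfolding line_mult_def
proof (rule Greatest_equality)
  show "lin l ^ Min (e0 ` support_in d E F) dvd F"
    unfolding line_dvd_iff[OF assms] using support_finite[of d E F] by (auto intro!: Min_le)
next
  fix y assume "lin l ^ y dvd F"
  then have "\<forall>i\<in>support_in d E F. y \<le> e0 i" by (simp add: line_dvd_iff[OF assms])
  then show "y \<le> Min (e0 ` support_in d E F)"
    using support_finite[of d E F] support_nonempty[OF E F] by (simp add: Min_ge_iff)
qed


definition adjcol :: "'k::comm_ring_1 coordsys \<Rightarrow> nat \<Rightarrow> 'k vec3" where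
  "adjcol E k = (case E of (u, v, w) \<Rightarrow> if k = 0 then cross v w else if k = 1 then cross w u else cross u v)"

definition vsc :: "'k::comm_ring_1 \<Rightarrow> 'k vec3 \<Rightarrow> 'k vec3" where
  "vsc c v = (c * comp v 0, c * comp v 1, c * comp v 2)"

definition pt :: "'k::field coordsys \<Rightarrow> nat \<Rightarrow> 'k vec3" where
  "pt E k = vsc (inverse (det3 E)) (adjcol E k)"

definition combo :: "'k::comm_ring_1 \<Rightarrow> 'k \<Rightarrow> 'k \<Rightarrow> 'k vec3 \<Rightarrow> 'k vec3 \<Rightarrow> 'k vec3 \<Rightarrow> 'k vec3" where
  "combo a b c x y z = (a * comp x 0 + b * comp y 0 + c * comp z 0,
                        a * comp x 1 + b * comp y 1 + c * comp z 1,
                        a * comp x 2 + b * comp y 2 + c * comp z 2)"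

lemma dot_adjcol: "dot (row E j) (adjcol E k) = (if j = k \<or> (j \<ge> 2 \<and> k \<ge> 2) then det3 E else 0)"
proof -
  obtain r0 r1 r2 where M: "E = (r0, r1, r2)" by (cases E) auto
  obtain x0 x1 x2 where r0: "r0 = (x0, x1, x2)" by (cases r0) auto
  obtain y0 y1 y2 where r1: "r1 = (y0, y1, y2)" by (cases r1) auto
  obtain z0 z1 z2 where r2: "r2 = (z0, z1, z2)" by (cases r2) auto
  show ?thesis unfolding M r0 r1 r2
    by (simp add: row_def adjcol_def dot_def cross_def det3_def algebra_simps)
qed

lemma recon_poly:
  "vsc (det3 E) v = combo (dot (row E 0) v) (dot (row E 1) v) (dot (row E 2) v) (adjcol E 0) (adjcol E 1) (adjcol E 2)"
proof -
  obtain r0 r1 r2 where M: "E = (r0, r1, r2)" by (cases E) auto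
  obtain x0 x1 x2 where r0: "r0 = (x0, x1, x2)" by (cases r0) auto
  obtain y0 y1 y2 where r1: "r1 = (y0, y1, y2)" by (cases r1) auto
  obtain z0 z1 z2 where r2: "r2 = (z0, z1, z2)" by (cases r2) auto
  obtain a b c where v: "v = (a, b, c)" by (cases v) auto
  show ?thesis unfolding M r0 r1 r2 v
    by (simp add: vsc_def combo_def adjcol_def dot_def cross_def det3_def algebra_simps)
qed

lemma dot_vsc: "dot u (vsc c v) = c * dot u v"
  by (simp add: dot_def vsc_def algebra_simps)

lemma dot_row_pt:
  assumes "coord_sys E"
  shows "dot (row E j) (pt E k) = (if j = k \<or> (j \<ge> 2 \<and> k \<ge> 2) then 1 else 0)"
  using assms by (simp add: pt_def dot_vsc dot_adjcol coord_sys_def)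

lemma recon:
  fixes E :: "'k::field coordsys"
  assumes "coord_sys E"
  shows "v = combo (dot (row E 0) v) (dot (row E 1) v) (dot (row E 2) v) (pt E 0) (pt E 1) (pt E 2)"
proof -
  have d: "det3 E \<noteq> 0" using assms by (simp add: coord_sys_def)
  have "vsc (inverse (det3 E)) (vsc (det3 E) v) = v" using d
    by (cases v) (simp add: vsc_def)
  then show ?thesis unfolding recon_poly
    by (simp add: pt_def vsc_def combo_def algebra_simps)
qed

lemma dots_zero_vec:
  fixes E :: "'k::field coordsys"
  assumes "coord_sys E" "dot (row E 0) v = 0" "dot (row E 1) v = 0" "dot (row E 2) v = 0"
  shows "v = (0, 0, 0)"
  using recon[OF assms(1), of v] assms by (simp add: combo_def)

lemma dots_point:
  fixes E :: "'k::field coordsys"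
  assumes "coord_sys E" "dot (row E 0) v = 0" "dot (row E 1) v = 0"
  shows "v = vsc (dot (row E 2) v) (pt E 2)"
  using recon[OF assms(1), of v] assms by (simp add: combo_def vsc_def)

lemma row0: "row E 0 = fst E" by (cases E) (simp add: row_def)
lemma row1: "row E 1 = fst (snd E)" by (cases E) (simp add: row_def)
lemma row2: "row E 2 = snd (snd E)" by (cases E) (simp add: row_def)

lemma taylor_lin: "subst (\<lambda>c. [:Const c:]) (\<lambda>j. [:Const (comp p j), Var j:]) (lin v) = [:Const (dot v p), lin v:]"
  unfolding subst_lin[OF hom_pConst]
  by (simp add: dot_def lin_def Const_add Const_mult algebra_simps)

lemma taylor_expand:
  fixes F :: "'k::field mpoly"
  assumes E: "coord_sys E" and F: "is_form d F" and p: "dot (row E 0) p = 0" "dot (row E 1) p = 0"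
  shows "taylor p F = (\<Sum>i\<in>support_in d E F. [:Const (cf E F i):] * [:0, lin (row E 0):] ^ e0 i *
      [:0, lin (row E 1):] ^ e1 i * [:Const (dot (row E 2) p), lin (row E 2):] ^ e2 i)"
  unfolding taylor_def
  by (subst F_expand[OF E F], subst eval_coords[OF hom_pConst], simp only: taylor_lin p Const_0)

lemma taylor_coeff:
  fixes F :: "'k::field mpoly"
  assumes E: "coord_sys E" and F: "is_form d F" and p: "dot (row E 0) p = 0" "dot (row E 1) p = 0"
  shows "coeff (taylor p F) k = (\<Sum>i\<in>support_in d E F. if e0 i + e1 i \<le> k then
     Const (cf E F i) * lin (row E 0) ^ e0 i * lin (row E 1) ^ e1 i *
     coeff ([:Const (dot (row E 2) p), lin (row E 2):] ^ e2 i) (k - (e0 i + e1 i)) else 0)"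
  unfolding taylor_expand[OF assms] by (rule coeff_sum3)

lemma Fp_zero [simp]: "Fp E 0 = 0" by (simp add: Fp_def)

lemma point_mult_char:
  fixes F :: "'k::field mpoly"
  assumes E: "coord_sys E" and F: "is_form d F" and p: "dot (row E 0) p = 0" "dot (row E 1) p = 0"
    and p0: "p \<noteq> (0, 0, 0)"
  defines "M \<equiv> Min ((\<lambda>i. e0 i + e1 i) ` support_in d E F)"
  shows "point_mult p F = M"
    and "tangent_cone p F = msub E (\<Sum>i\<in>{i\<in>support_in d E F. e0 i + e1 i = M}.
            Const (cf E F i * dot (row E 2) p ^ e2 i) * Xm (e0 i, e1 i, 0))"
proof -
  let ?S = "support_in d E F"
  let ?S' = "{i\<in>?S. e0 i + e1 i = M}"
  let ?g = "dot (row E 2) p"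
  have g: "?g \<noteq> 0" using dots_zero_vec[OF E p] p0 by auto
  have fin: "finite ?S" by (rule support_finite)
  have Mle: "M \<le> e0 i + e1 i" if "i \<in> ?S" for i unfolding M_def using fin that by (auto intro!: Min_le)
  obtain j where j: "j \<in> ?S" "e0 j + e1 j = M"
    unfolding M_def using fin support_nonempty[OF E F] by (metis (no_types, lifting) Min_in finite_imageI image_iff image_is_empty)
  have low: "coeff (taylor p F) k = 0" if "k < M" for k
    unfolding taylor_coeff[OF E F p] using Mle that by (intro sum.neutral) (auto dest: Mle)
  have "coeff (taylor p F) M = (\<Sum>i\<in>?S. if e0 i + e1 i = M then
     Const (cf E F i) * lin (row E 0) ^ e0 i * lin (row E 1) ^ e1 i * Const ?g ^ e2 i else 0)"
    unfolding taylor_coeff[OF E F p]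
    by (intro sum.cong refl) (auto simp: coeff_pC_power0 dest: Mle)
  also have "\<dots> = (\<Sum>i\<in>?S'. Const (cf E F i) * lin (row E 0) ^ e0 i * lin (row E 1) ^ e1 i * Const ?g ^ e2 i)"
    by (simp only: sum.inter_filter[OF fin])
  also have "\<dots> = msub E (\<Sum>i\<in>?S'. Const (cf E F i * ?g ^ e2 i) * Xm (e0 i, e1 i, 0))"
    by (simp add: msub_sum msub_mult msub_Const msub_power msub_Xm Const_mult Const_power ac_simps)
  finally have cM: "coeff (taylor p F) M = msub E (\<Sum>i\<in>?S'. Const (cf E F i * ?g ^ e2 i) * Xm (e0 i, e1 i, 0))" .
  have inj: "inj_on (\<lambda>i. (e0 i, e1 i, 0::nat)) ?S'"
  proof (rule inj_onI)
    fix a b assume a: "a \<in> ?S'" and b: "b \<in> ?S'" and eq: "(e0 a, e1 a, 0::nat) = (e0 b, e1 b, 0)"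
    have "e2 a = e2 b" using a b support_exps[of a d E F] support_exps[of b d E F] by auto
    then show "a = b" using eq by (cases a, cases b) auto
  qed
  have jS': "j \<in> ?S'" using j by auto
  have "Poly_Mapping.lookup (Fp E (coeff (taylor p F) M)) (mnm (e0 j, e1 j, 0)) = cf E F j * ?g ^ e2 j"
    unfolding cM Fp_T[OF E]
    using lookup_sum_Xm_gen[OF inj jS', of "\<lambda>i. cf E F i * ?g ^ e2 i"] fin by simp
  moreover have "cf E F j \<noteq> 0" using j(1) support_char[OF E F] by auto
  ultimately have "Fp E (coeff (taylor p F) M) \<noteq> 0" using g by auto
  then have nz: "coeff (taylor p F) M \<noteq> 0" by auto
  show pm: "point_mult p F = M"
    unfolding point_mult_def
  proof (rule Least_equality)
    show "coeff (taylor p F) M \<noteq> 0" by (rule nz)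
    fix y assume "coeff (taylor p F) y \<noteq> 0"
    then show "M \<le> y" using low by (meson not_le)
  qed
  show "tangent_cone p F = msub E (\<Sum>i\<in>?S'. Const (cf E F i * ?g ^ e2 i) * Xm (e0 i, e1 i, 0))"
    unfolding tangent_cone_def pm by (rule cM)
qed


lemma coeffs_unique:
  fixes F :: "'k::field mpoly"
  assumes E: "coord_sys E" and F: "is_form d F"
    and a: "(\<forall>i. a i \<noteq> 0 \<longrightarrow> i \<in> exps d) \<and> F = (\<Sum>i\<in>exps d. Const (a i) * emono E i)"
  shows "coeffs_in d E F = a"
proof -
  have fp: "Fp E F = (\<Sum>i\<in>exps d. Const (a i) * Xm i)"
    using a by (simp add: emono_msub Fp_def msub_sum msub_mult msub_Const) (metis Fp_T[OF E] Fp_def)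
  show ?thesis
  proof
    fix i show "coeffs_in d E F i = a i"
    proof (cases "i \<in> exps d")
      case True then show ?thesis unfolding coeffs_in_char[OF E F] fp using lookup_sum_Xm[where a=a, OF True] by simp
    next
      case False then show ?thesis using a unfolding coeffs_in_char[OF E F] by metis
    qed
  qed
qed

definition swap01 :: "'k coordsys \<Rightarrow> 'k coordsys" where
  "swap01 E = (fst (snd E), fst E, snd (snd E))"
definition swap12 :: "'k coordsys \<Rightarrow> 'k coordsys" where
  "swap12 E = (fst E, snd (snd E), fst (snd E))"
definition sw01 :: "nat \<times> nat \<times> nat \<Rightarrow> nat \<times> nat \<times> nat" where
  "sw01 i = (e1 i, e0 i, e2 i)"
definition sw12 :: "nat \<times> nat \<times> nat \<Rightarrow> nat \<times> nat \<times> nat" where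
  "sw12 i = (e0 i, e2 i, e1 i)"

lemma sw01_inv [simp]: "sw01 (sw01 i) = i" by (cases i) (simp add: sw01_def)
lemma sw12_inv [simp]: "sw12 (sw12 i) = i" by (cases i) (simp add: sw12_def)
lemma sw01_exps: "sw01 i \<in> exps d \<longleftrightarrow> i \<in> exps d" by (cases i) (auto simp: sw01_def exps_def)
lemma sw12_exps: "sw12 i \<in> exps d \<longleftrightarrow> i \<in> exps d" by (cases i) (auto simp: sw12_def exps_def)

lemma coord_swap01: "coord_sys E \<Longrightarrow> coord_sys (swap01 E)"
  by (cases E) (auto simp: coord_sys_def swap01_def det3_def algebra_simps)
lemma coord_swap12: "coord_sys E \<Longrightarrow> coord_sys (swap12 E)"
  by (cases E) (auto simp: coord_sys_def swap12_def det3_def algebra_simps)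

lemma emono_swap01: "emono (swap01 E) i = emono E (sw01 i)"
  by (cases E; cases i) (simp add: emono_def swap01_def sw01_def ac_simps)
lemma emono_swap12: "emono (swap12 E) i = emono E (sw12 i)"
  by (cases E; cases i) (simp add: emono_def swap12_def sw12_def ac_simps)

lemma bij_sw01: "bij_betw sw01 (exps d) (exps d)"
  by (rule bij_betw_byWitness[where f'=sw01]) (auto simp: sw01_exps)
lemma bij_sw12: "bij_betw sw12 (exps d) (exps d)"
  by (rule bij_betw_byWitness[where f'=sw12]) (auto simp: sw12_exps)

lemma coeffs_prop:
  fixes F :: "'k::field mpoly"
  assumes E: "coord_sys E" and F: "is_form d F"
  shows "(\<forall>i. coeffs_in d E F i \<noteq> 0 \<longrightarrow> i \<in> exps d) \<and> F = (\<Sum>i\<in>exps d. Const (coeffs_in d E F i) * emono E i)"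
proof -
  let ?c = "(\<lambda>i. if i \<in> exps d then Poly_Mapping.lookup (Fp E F) (mnm i) else 0)"
  have hf: "hf d (Fp E F)" by (rule hf_Fp[OF F])
  have "F = msub E (Fp E F)" using T_Fp[OF E] by simp
  also have "\<dots> = msub E (\<Sum>i\<in>exps d. Const (Poly_Mapping.lookup (Fp E F) (mnm i)) * Xm i)"
    using hf_expand[OF hf] by simp
  also have "\<dots> = (\<Sum>i\<in>exps d. Const (?c i) * emono E i)"
    by (simp add: msub_sum msub_mult msub_Const emono_msub)
  finally show ?thesis unfolding coeffs_in_char[OF E F] by auto
qed

lemma coeffs_swap01:
  fixes F :: "'k::field mpoly"
  assumes E: "coord_sys E" and F: "is_form d F"
  shows "coeffs_in d (swap01 E) F = (\<lambda>i. coeffs_in d E F (sw01 i))"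
proof (rule coeffs_unique[OF coord_swap01[OF E] F])
  let ?a = "coeffs_in d E F"
  have a: "(\<forall>i. ?a i \<noteq> 0 \<longrightarrow> i \<in> exps d)" "F = (\<Sum>i\<in>exps d. Const (?a i) * emono E i)"
    using coeffs_prop[OF E F] by auto
  have "(\<Sum>i\<in>exps d. Const (?a (sw01 i)) * emono (swap01 E) i) = (\<Sum>i\<in>exps d. Const (?a (sw01 i)) * emono E (sw01 i))"
    by (simp add: emono_swap01)
  also have "\<dots> = (\<Sum>j\<in>exps d. Const (?a j) * emono E j)"
    by (rule sum.reindex_bij_betw[OF bij_sw01, of "\<lambda>j. Const (?a j) * emono E j"])
  finally show "(\<forall>i. ?a (sw01 i) \<noteq> 0 \<longrightarrow> i \<in> exps d) \<and> F = (\<Sum>i\<in>exps d. Const (?a (sw01 i)) * emono (swap01 E) i)"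
    using a sw01_exps by metis
qed

lemma coeffs_swap12:
  fixes F :: "'k::field mpoly"
  assumes E: "coord_sys E" and F: "is_form d F"
  shows "coeffs_in d (swap12 E) F = (\<lambda>i. coeffs_in d E F (sw12 i))"
proof (rule coeffs_unique[OF coord_swap12[OF E] F])
  let ?a = "coeffs_in d E F"
  have a: "(\<forall>i. ?a i \<noteq> 0 \<longrightarrow> i \<in> exps d)" "F = (\<Sum>i\<in>exps d. Const (?a i) * emono E i)"
    using coeffs_prop[OF E F] by auto
  have "(\<Sum>i\<in>exps d. Const (?a (sw12 i)) * emono (swap12 E) i) = (\<Sum>i\<in>exps d. Const (?a (sw12 i)) * emono E (sw12 i))"
    by (simp add: emono_swap12)
  also have "\<dots> = (\<Sum>j\<in>exps d. Const (?a j) * emono E j)"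
    by (rule sum.reindex_bij_betw[OF bij_sw12, of "\<lambda>j. Const (?a j) * emono E j"])
  finally show "(\<forall>i. ?a (sw12 i) \<noteq> 0 \<longrightarrow> i \<in> exps d) \<and> F = (\<Sum>i\<in>exps d. Const (?a (sw12 i)) * emono (swap12 E) i)"
    using a sw12_exps by metis
qed

lemma support_swap01:
  fixes F :: "'k::field mpoly"
  assumes E: "coord_sys E" and F: "is_form d F"
  shows "support_in d (swap01 E) F = sw01 ` support_in d E F"
proof (rule set_eqI)
  fix i
  have im: "i \<in> sw01 ` X \<longleftrightarrow> sw01 i \<in> X" for X by (metis image_iff sw01_inv)
  show "i \<in> support_in d (swap01 E) F \<longleftrightarrow> i \<in> sw01 ` support_in d E F"
    unfolding im support_in_def coeffs_swap01[OF E F] by (simp add: sw01_exps)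
qed

lemma support_swap12:
  fixes F :: "'k::field mpoly"
  assumes E: "coord_sys E" and F: "is_form d F"
  shows "support_in d (swap12 E) F = sw12 ` support_in d E F"
proof (rule set_eqI)
  fix i
  have im: "i \<in> sw12 ` X \<longleftrightarrow> sw12 i \<in> X" for X by (metis image_iff sw12_inv)
  show "i \<in> support_in d (swap12 E) F \<longleftrightarrow> i \<in> sw12 ` support_in d E F"
    unfolding im support_in_def coeffs_swap12[OF E F] by (simp add: sw12_exps)
qed


lemma row1': "row E (Suc 0) = fst (snd E)" by (cases E) (simp add: row_def)

definition wv :: "int \<times> int \<times> int \<Rightarrow> nat \<Rightarrow> int" where
  "wv w j = (case w of (a, b, c) \<Rightarrow> if j = 0 then a else if j = 1 then b else if j = 2 then c else 0)"

lemma lf_wv_mono: "lf (wv w) (mnm i) = pairing i w"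
  by (cases w; cases i) (simp add: lf_mono wv_def pairing_def)

lemma LB_lin_gen:
  assumes "\<And>m. m < 3 \<Longrightarrow> comp v m \<noteq> 0 \<Longrightarrow> c \<le> f m"
  shows "LB (lf f) c (lin v)"
proof -
  have t: "LB (lf f) c (Const (comp v m) * Var m)" if "m < 3" for m
  proof (cases "comp v m = 0")
    case True then show ?thesis by simp
  next
    case False
    then have "c \<le> f m" using assms that by auto
    moreover have "LB (lf f) (0 + f m) (Const (comp v m) * Var m)" by (intro LB_mult LB_Const LB_Var)
    ultimately show ?thesis by (auto intro: LB_mono)
  qed
  show ?thesis unfolding lin_def using t[of 0] t[of 1] t[of 2] by (intro LB_add) auto
qed

lemma vlin_minv_comp:
  fixes E' :: "'k::field coordsys"
  shows "comp (vlin v (minv E')) m = (if m < 3 then dot v (pt E' m) else dot v (pt E' 2))"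
proof -
  obtain r0 r1 r2 where M: "E' = (r0, r1, r2)" by (cases E') auto
  obtain x0 x1 x2 where r0: "r0 = (x0, x1, x2)" by (cases r0) auto
  obtain y0 y1 y2 where r1: "r1 = (y0, y1, y2)" by (cases r1) auto
  obtain z0 z1 z2 where r2: "r2 = (z0, z1, z2)" by (cases r2) auto
  show ?thesis unfolding M r0 r1 r2
    by (auto simp: vlin_def minv_def msc_def madj_def pt_def vsc_def adjcol_def dot_def ent_def Let_def comp_def algebra_simps)
qed

lemma prop_dot: "proportional u l \<Longrightarrow> \<exists>c. c \<noteq> 0 \<and> dot u v = c * dot l v"
proof -
  assume "proportional u l"
  then obtain c where c: "c \<noteq> 0" "u = (c * comp l 0, c * comp l 1, c * comp l 2)" by (auto simp: proportional_def)
  then have "dot u v = c * dot l v" by (simp add: dot_def algebra_simps)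
  then show ?thesis using c by blast
qed

lemma prop_dot0: "proportional u (l::'k::field vec3) \<Longrightarrow> dot u v = 0 \<longleftrightarrow> dot l v = 0"
  using prop_dot[of u l v] by auto

lemma borel:
  fixes F :: "'k::field mpoly"
  assumes F: "is_form d F"
    and E: "coord_sys E" "proportional (fst E) l" "dot (fst E) p = 0" "dot (fst (snd E)) p = 0"
    and E': "coord_sys E'" "proportional (fst E') l" "dot (fst E') p = 0" "dot (fst (snd E')) p = 0"
    and p: "p \<noteq> (0, 0, 0)"
    and inst: "instability d F E w"
  shows "instability d F E' w"
proof -
  obtain w0 w1 w2 where w: "w = (w0, w1, w2)" by (cases w) auto
  have ord: "w0 \<ge> w1" "w1 \<ge> w2" using inst unfolding instability_def ordered_def w by auto
  let ?C = "mmul E (minv E')"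
  have "LB (lf (wv w)) 1 (Fp E F)"
    using inst unfolding LB_def keys_Fp[OF E(1) F] instability_def by (auto simp: lf_wv_mono)
  have C: "comp (row ?C k) m = dot (row E k) (pt E' m)" if "k < 3" "m < 3" for k m
  proof -
    have "row ?C k = vlin (row E k) (minv E')"
      using that by (cases "k = 0"; cases "k = 1") (auto simp: mmul_def row_def)
    then show ?thesis using that by (simp add: vlin_minv_comp)
  qed
  have d0: "dot (row E 0) (pt E' m) = 0" if "m = 1 \<or> m = 2" for m
  proof -
    have "dot (row E' 0) (pt E' m) = 0" using that dot_row_pt[OF E'(1)] by auto
    then show ?thesis using E(2) E'(2) prop_dot0 by (metis row0)
  qed
  have d12: "dot (row E 1) (pt E' 2) = 0"
  proof -
    have "dot (row E' 0) p = 0" "dot (row E' 1) p = 0" using E' by (simp_all add: row0 row1 row1')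
    then have pp: "p = vsc (dot (row E' 2) p) (pt E' 2)" by (rule dots_point[OF E'(1)])
    have g: "dot (row E' 2) p \<noteq> 0" using dots_zero_vec[OF E'(1)] \<open>dot (row E' 0) p = 0\<close> \<open>dot (row E' 1) p = 0\<close> p by blast
    have "dot (row E 1) p = 0" using E by (simp add: row1 row1')
    then have "dot (row E' 2) p * dot (row E 1) (pt E' 2) = 0" by (subst (asm) pp) (simp add: dot_vsc)
    then show ?thesis using g by simp
  qed
  have sig: "LB (lf (wv w)) (wv w k) (if k < 3 then lin (row ?C k) else Var k)" for k
  proof (cases "k < 3")
    case False then show ?thesis by (simp add: LB_Var)
  next
    case True
    have "LB (lf (wv w)) (wv w k) (lin (row ?C k))"
    proof (rule LB_lin_gen)
      fix m assume m: "m < 3" and nz: "comp (row ?C k) m \<noteq> 0"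
      then have nz': "dot (row E k) (pt E' m) \<noteq> 0" using C True by simp
      have "k = 0 \<or> k = 1 \<or> k = 2" "m = 0 \<or> m = 1 \<or> m = 2" using True m by auto
      then show "wv w k \<le> wv w m" using nz' d0 d12 ord unfolding w wv_def by auto
    qed
    then show ?thesis using True by simp
  qed
  have "Fp E' F = msub ?C (Fp E F)"
    by (simp add: Fp_def msub_msub[symmetric] T_Fp[OF E(1), unfolded Fp_def])
  then have "LB (lf (wv w)) 1 (Fp E' F)"
    unfolding msub_def using subst_LB[OF sig \<open>LB (lf (wv w)) 1 (Fp E F)\<close>] by simp
  then have "\<forall>i\<in>support_in d E' F. pairing i w > 0"
    unfolding LB_def keys_Fp[OF E'(1) F] by (auto simp: lf_wv_mono)
  then show ?thesis using inst E'(1) unfolding instability_def by auto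
qed


lemma row_nonzero:
  fixes E :: "'k::field coordsys"
  assumes "coord_sys E" "k < 3"
  shows "row E k \<noteq> (0, 0, 0)"
proof
  assume "row E k = (0, 0, 0)"
  then have "dot (row E k) (pt E k) = 0" by (simp add: dot_def)
  then show False using dot_row_pt[OF assms(1), of k k] by simp
qed

lemma pt_nonzero:
  assumes "coord_sys E"
  shows "pt E k \<noteq> (0, 0, 0)"
proof
  assume "pt E k = (0, 0, 0)"
  then have "dot (row E k) (pt E k) = 0" by (simp add: dot_def)
  then show False using dot_row_pt[OF assms(1), of k k] by simp
qed

lemma prop_refl: "(v::'k::field vec3) \<noteq> (0,0,0) \<Longrightarrow> proportional v v"
  by (cases v) (auto simp: proportional_def intro: exI[where x=1])

lemma prop_refl': "proportional (v::'k::field vec3) v"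
  by (cases v) (auto simp: proportional_def intro: exI[where x=1])

lemma Min_le_S: "finite A \<Longrightarrow> x \<in> A \<Longrightarrow> Min (f ` A) \<le> f x"
  by (auto intro: Min_le)

lemma cond_a_of:
  fixes F :: "'k::field mpoly"
  assumes E: "coord_sys E" and F: "is_form d F" and h: "\<forall>i\<in>support_in d E F. d < 3 * e0 i"
  shows "cond_a d F (row E 0)"
proof -
  have "line_mult (row E 0) F = Min (e0 ` support_in d E F)"
    by (rule line_mult_char[OF E F prop_refl'])
  moreover obtain j where "j \<in> support_in d E F" "Min (e0 ` support_in d E F) = e0 j"
    using support_finite[of d E F] support_nonempty[OF E F]
    by (metis (no_types, lifting) Min_in finite_imageI image_iff image_is_empty)
  ultimately show ?thesis using h row_nonzero[OF E, of 0] by (auto simp: cond_a_def)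
qed

lemma cond_a_to:
  fixes F :: "'k::field mpoly"
  assumes E: "coord_sys E" and F: "is_form d F" and c: "cond_a d F l" and p: "proportional (row E 0) l"
  shows "\<forall>i\<in>support_in d E F. d < 3 * e0 i"
proof
  fix i assume i: "i \<in> support_in d E F"
  have "line_mult l F = Min (e0 ` support_in d E F)" by (rule line_mult_char[OF E F p])
  then have "line_mult l F \<le> e0 i" using Min_le_S[OF support_finite i] by simp
  then show "d < 3 * e0 i" using c by (auto simp: cond_a_def)
qed

lemma cond_b_of:
  fixes F :: "'k::field mpoly"
  assumes E: "coord_sys E" and F: "is_form d F" and h: "\<forall>i\<in>support_in d E F. 3 * e2 i < d"
  shows "cond_b d F (pt E 2)"
proof -
  have p: "dot (row E 0) (pt E 2) = 0" "dot (row E 1) (pt E 2) = 0" using dot_row_pt[OF E] by auto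
  have "point_mult (pt E 2) F = Min ((\<lambda>i. e0 i + e1 i) ` support_in d E F)"
    by (rule point_mult_char(1)[OF E F p pt_nonzero[OF E]])
  moreover obtain j where "j \<in> support_in d E F" "Min ((\<lambda>i. e0 i + e1 i) ` support_in d E F) = e0 j + e1 j"
    using support_finite[of d E F] support_nonempty[OF E F]
    by (metis (no_types, lifting) Min_in finite_imageI image_iff image_is_empty)
  ultimately show ?thesis using h support_exps[of j d E F] pt_nonzero[OF E] by (auto simp: cond_b_def)
qed

lemma cond_b_to:
  fixes F :: "'k::field mpoly"
  assumes E: "coord_sys E" and F: "is_form d F" and c: "cond_b d F p"
    and p: "dot (row E 0) p = 0" "dot (row E 1) p = 0"
  shows "\<forall>i\<in>support_in d E F. 3 * e2 i < d"
proof
  fix i assume i: "i \<in> support_in d E F"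
  have p0: "p \<noteq> (0,0,0)" using c by (simp add: cond_b_def)
  have "point_mult p F = Min ((\<lambda>i. e0 i + e1 i) ` support_in d E F)"
    by (rule point_mult_char(1)[OF E F p p0])
  then have "point_mult p F \<le> e0 i + e1 i" using Min_le_S[OF support_finite i] by simp
  then show "3 * e2 i < d" using c support_exps[OF i] by (auto simp: cond_b_def)
qed

lemma cond_d_of:
  fixes F :: "'k::field mpoly"
  assumes E: "coord_sys E" and F: "is_form d F"
    and h1: "d < 2 * Min ((\<lambda>i. e0 i + e1 i) ` support_in d E F)"
    and h2: "\<forall>i\<in>support_in d E F. e0 i + e1 i = Min ((\<lambda>i. e0 i + e1 i) ` support_in d E F) \<longrightarrow>
              Min ((\<lambda>i. e0 i + e1 i) ` support_in d E F) < 2 * e0 i"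
  shows "cond_d d F (row E 0) (pt E 2)"
proof -
  let ?S = "support_in d E F"
  let ?M = "Min ((\<lambda>i. e0 i + e1 i) ` ?S)"
  let ?S' = "{i\<in>?S. e0 i + e1 i = ?M}"
  let ?g = "dot (row E 2) (pt E 2)"
  have p: "dot (row E 0) (pt E 2) = 0" "dot (row E 1) (pt E 2) = 0" using dot_row_pt[OF E] by auto
  note pm = point_mult_char[OF E F p pt_nonzero[OF E]]
  have fin: "finite ?S'" using support_finite[of d E F] by simp
  obtain j where j: "j \<in> ?S" "?M = e0 j + e1 j"
    using support_finite[of d E F] support_nonempty[OF E F]
    by (metis (no_types, lifting) Min_in finite_imageI image_iff image_is_empty)
  then have ne: "?S' \<noteq> {}" by (metis (mono_tags, lifting) empty_iff mem_Collect_eq)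
  define e where "e = Min (e0 ` ?S')"
  obtain j' where j': "j' \<in> ?S'" "e = e0 j'"
    unfolding e_def using fin ne by (metis (no_types, lifting) Min_in finite_imageI image_iff image_is_empty)
  have e2: "?M < 2 * e" using h2 j' by auto
  have ele: "e \<le> e0 i" if "i \<in> ?S'" for i unfolding e_def using fin that by (auto intro: Min_le)
  have "(\<Sum>i\<in>?S'. Const (cf E F i * ?g ^ e2 i) * Xm (e0 i, e1 i, 0)) =
        (\<Sum>i\<in>?S'. Const (cf E F i * ?g ^ e2 i) * (Var 0 ^ e * Xm (e0 i - e, e1 i, 0)))"
    by (intro sum.cong refl) (simp add: Xm_shift0 ele)
  also have "\<dots> = Var 0 ^ e * (\<Sum>i\<in>?S'. Const (cf E F i * ?g ^ e2 i) * Xm (e0 i - e, e1 i, 0))"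
    by (simp add: sum_distrib_left ac_simps)
  finally have "tangent_cone (pt E 2) F = lin (row E 0) ^ e * msub E (\<Sum>i\<in>?S'. Const (cf E F i * ?g ^ e2 i) * Xm (e0 i - e, e1 i, 0))"
    unfolding pm(2) by (simp add: msub_mult msub_power msub_Var)
  then have "lin (row E 0) ^ e dvd tangent_cone (pt E 2) F" by (rule dvdI)
  then show ?thesis unfolding cond_d_def pm(1) using h1 e2 row_nonzero[OF E, of 0] pt_nonzero[OF E] by auto
qed


lemma subst_lin_id: "subst id (comp p) (lin v) = dot v p"
  by (simp add: subst_lin[OF hom_id] dot_def algebra_simps)

lemma subst_lin_pC: "subst (\<lambda>c. [:c:]) (\<lambda>j. [:comp p j, comp q j:]) (lin v) = [:dot v p, dot v q:]"
  by (simp add: subst_lin[OF hom_pC] dot_def algebra_simps)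

lemma cond_c_of:
  fixes F :: "'k::field mpoly"
  assumes E: "coord_sys E" and F: "is_form d F"
    and m0: "0 < Min (e0 ` support_in d E F)"
    and h: "\<forall>i\<in>support_in d E F. e0 i = Min (e0 ` support_in d E F) \<longrightarrow> d < 2 * e1 i + Min (e0 ` support_in d E F)"
  shows "cond_c d F (row E 0) (pt E 2)"
proof -
  let ?S = "support_in d E F"
  define m where "m = Min (e0 ` ?S)"
  let ?h = "\<lambda>i. (e0 i - m, e1 i, e2 i)"
  define G' where "G' = (\<Sum>i\<in>?S. Const (cf E F i) * Xm (?h i))"
  define G where "G = msub E G'"
  let ?l = "row E 0" and ?p = "pt E 2"
  have fin: "finite ?S" by (rule support_finite)
  have mle: "m \<le> e0 i" if "i \<in> ?S" for i unfolding m_def using fin that by (auto intro: Min_le)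
  obtain j0 where j0: "j0 \<in> ?S" "e0 j0 = m"
    unfolding m_def using fin support_nonempty[OF E F]
    by (metis (no_types, lifting) Min_in finite_imageI image_iff image_is_empty)
  have hS: "d < 2 * e1 i + m" if "i \<in> ?S" "e0 i = m" for i using h that unfolding m_def by auto
  have inj: "inj_on ?h ?S"
  proof (rule inj_onI)
    fix a b assume a: "a \<in> ?S" and b: "b \<in> ?S" and eq: "?h a = ?h b"
    then have "e0 a = e0 b" using mle[OF a] mle[OF b] by auto
    then show "a = b" using eq by (cases a, cases b) auto
  qed
  have cfnz: "cf E F i \<noteq> 0" if "i \<in> ?S" for i using that support_char[OF E F] by auto
  have "F = msub E (\<Sum>i\<in>?S. Const (cf E F i) * Xm i)" by (rule F_expand[OF E F])
  also have "(\<Sum>i\<in>?S. Const (cf E F i) * Xm i) = (\<Sum>i\<in>?S. Const (cf E F i) * (Var 0 ^ m * Xm (?h i)))"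
    by (intro sum.cong refl) (metis Xm_shift0 mle prod.collapse e0_def e1_def e2_def)
  also have "\<dots> = Var 0 ^ m * G'" unfolding G'_def by (simp add: sum_distrib_left ac_simps)
  finally have Ffac: "F = lin ?l ^ m * G" unfolding G_def by (simp add: msub_mult msub_power msub_Var)
  have ndvd: "\<not> lin ?l dvd G"
  proof
    assume "lin ?l dvd G"
    then obtain H where "G = lin ?l * H" by (auto elim: dvdE)
    then have "G' = Var 0 ^ 1 * Fp E H" using Fp_T[OF E, of G'] unfolding G_def
      by (simp add: Fp_mult Fp_lin0[OF E])
    then have "Var 0 ^ 1 dvd G'" by (rule dvdI)
    from Var_dvd_keys[OF this] have all: "\<forall>n\<in>Poly_Mapping.keys G'. 1 \<le> Poly_Mapping.lookup n 0" .
    have "Poly_Mapping.lookup G' (mnm (?h j0)) = cf E F j0"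
      unfolding G'_def by (rule lookup_sum_Xm_gen[OF inj j0(1) fin])
    then have "mnm (?h j0) \<in> Poly_Mapping.keys G'" using cfnz[OF j0(1)] by (simp add: in_keys_iff)
    then show False using all j0 by (auto simp: lookup_mono)
  qed
  have p: "dot (row E 0) ?p = 0" "dot (row E 1) ?p = 0" "dot (row E 2) ?p = 1" using dot_row_pt[OF E] by auto
  have e1pos: "0 < e1 i" if "i \<in> ?S" "e0 i = m" for i
  proof -
    have "e0 i + e1 i + e2 i = d" by (rule support_exps[OF that(1)])
    then show ?thesis using hS[OF that] that by linarith
  qed
  have Gp: "subst id (comp ?p) G = 0"
    unfolding G_def G'_def eval_coords[OF hom_id] subst_lin_id p
  proof (intro sum.neutral ballI)
    fix i assume i: "i \<in> ?S"
    show "id (cf E F i) * 0 ^ e0 (?h i) * 0 ^ e1 (?h i) * 1 ^ e2 (?h i) = 0"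
    proof (cases "e0 i = m")
      case True then show ?thesis using e1pos[OF i] by simp
    next
      case False then show ?thesis using mle[OF i] by simp
    qed
  qed
  have "\<exists>q. q \<noteq> (0, 0, 0) \<and> dot ?l q = 0 \<and> \<not> proportional q ?p"
  proof (intro exI conjI)
    show "pt E 1 \<noteq> (0, 0, 0)" by (rule pt_nonzero[OF E])
    show "dot ?l (pt E 1) = 0" using dot_row_pt[OF E] by simp
    show "\<not> proportional (pt E 1) ?p"
    proof
      assume "proportional (pt E 1) ?p"
      then obtain c where "pt E 1 = (c * comp ?p 0, c * comp ?p 1, c * comp ?p 2)" by (auto simp: proportional_def)
      then have "dot (row E 1) (pt E 1) = c * dot (row E 1) ?p" by (simp add: dot_def algebra_simps)
      then show False using dot_row_pt[OF E, of 1 1] p by simp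
    qed
  qed
  then have q: "(SOME q. q \<noteq> (0, 0, 0) \<and> dot ?l q = 0 \<and> \<not> proportional q ?p) \<noteq> (0, 0, 0) \<and>
      dot ?l (SOME q. q \<noteq> (0, 0, 0) \<and> dot ?l q = 0 \<and> \<not> proportional q ?p) = 0 \<and>
      \<not> proportional (SOME q. q \<noteq> (0, 0, 0) \<and> dot ?l q = 0 \<and> \<not> proportional q ?p) ?p"
    by (rule someI_ex)
  define q where "q = (SOME q. q \<noteq> (0, 0, 0) \<and> dot ?l q = 0 \<and> \<not> proportional q ?p)"
  have q0: "q \<noteq> (0,0,0)" and ql: "dot ?l q = 0" and qp: "\<not> proportional q ?p" using q unfolding q_def by auto
  have beta: "dot (row E 1) q \<noteq> 0"
  proof
    assume b: "dot (row E 1) q = 0"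
    have qq: "q = vsc (dot (row E 2) q) ?p" by (rule dots_point[OF E ql b])
    have g: "dot (row E 2) q \<noteq> 0" using dots_zero_vec[OF E ql b] q0 by blast
    have "q = (dot (row E 2) q * comp ?p 0, dot (row E 2) q * comp ?p 1, dot (row E 2) q * comp ?p 2)"
      by (rule trans[OF qq]) (simp add: vsc_def)
    then have "proportional q ?p" using g unfolding proportional_def by blast
    then show False using qp by simp
  qed
  let ?b = "dot (row E 1) q"
  define K where "K = Min (e1 ` {i\<in>?S. e0 i = m})"
  have fin1: "finite {i\<in>?S. e0 i = m}" using fin by simp
  have ne1: "{i\<in>?S. e0 i = m} \<noteq> {}" using j0 by blast
  have "K \<in> e1 ` {i\<in>?S. e0 i = m}" unfolding K_def
    using fin1 ne1 by (intro Min_in) simp_all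
  then obtain j where j: "j \<in> ?S" "e0 j = m" "e1 j = K" by auto
  have Kle: "K \<le> e1 i" if "i \<in> ?S" "e0 i = m" for i unfolding K_def using fin1 that by (auto intro: Min_le)
  have uniq: "i = j" if "i \<in> ?S" "e0 i = m" "e1 i = K" for i
  proof -
    have "e2 i = e2 j" using support_exps[OF that(1)] support_exps[OF j(1)] that j by linarith
    then show ?thesis using that j by (cases i, cases j) auto
  qed
  have coeffk: "coeff (subst (\<lambda>c. [:c:]) (\<lambda>j. [:comp ?p j, comp q j:]) G) k =
      (\<Sum>i\<in>?S. if e0 (?h i) + e1 (?h i) \<le> k then cf E F i * dot ?l q ^ e0 (?h i) * ?b ^ e1 (?h i) *
         coeff ([:1, dot (row E 2) q:] ^ e2 (?h i)) (k - (e0 (?h i) + e1 (?h i))) else 0)" for k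
    unfolding G_def G'_def eval_coords[OF hom_pC] subst_lin_pC p by (rule coeff_sum3)
  have low: "coeff (subst (\<lambda>c. [:c:]) (\<lambda>j. [:comp ?p j, comp q j:]) G) k = 0" if "k < K" for k
    unfolding coeffk
  proof (intro sum.neutral ballI)
    fix i assume i: "i \<in> ?S"
    show "(if e0 (?h i) + e1 (?h i) \<le> k then cf E F i * dot ?l q ^ e0 (?h i) * ?b ^ e1 (?h i) *
         coeff ([:1, dot (row E 2) q:] ^ e2 (?h i)) (k - (e0 (?h i) + e1 (?h i))) else 0) = 0"
    proof (cases "e0 i = m")
      case True then show ?thesis using Kle[OF i True] that by auto
    next
      case False then show ?thesis using mle[OF i] ql by simp
    qed
  qed
  have "coeff (subst (\<lambda>c. [:c:]) (\<lambda>j. [:comp ?p j, comp q j:]) G) K =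
      (\<Sum>i\<in>?S. if i = j then cf E F j * ?b ^ K else 0)"
    unfolding coeffk
  proof (intro sum.cong refl)
    fix i assume i: "i \<in> ?S"
    show "(if e0 (?h i) + e1 (?h i) \<le> K then cf E F i * dot ?l q ^ e0 (?h i) * ?b ^ e1 (?h i) *
         coeff ([:1, dot (row E 2) q:] ^ e2 (?h i)) (K - (e0 (?h i) + e1 (?h i))) else 0) =
       (if i = j then cf E F j * ?b ^ K else 0)"
    proof (cases "e0 i = m")
      case True
      show ?thesis
      proof (cases "e1 i = K")
        case True2: True
        then show ?thesis using uniq[OF i True True2] j by (simp add: coeff_pC_power0)
      next
        case False
        then have "K < e1 i" using Kle[OF i True] by simp
        then show ?thesis using True j by auto
      qed
    next
      case False then show ?thesis using mle[OF i] ql j by auto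
    qed
  qed
  also have "\<dots> = cf E F j * ?b ^ K" using j(1) fin by simp
  finally have cK: "coeff (subst (\<lambda>c. [:c:]) (\<lambda>j. [:comp ?p j, comp q j:]) G) K \<noteq> 0"
    using cfnz[OF j(1)] beta by simp
  have im: "int_mult ?l ?p G = K"
    unfolding int_mult_def Let_def q_def[symmetric]
  proof (rule Least_equality)
    show "coeff (subst (\<lambda>c. [:c:]) (\<lambda>j. [:comp ?p j, comp q j:]) G) K \<noteq> 0" by (rule cK)
    fix y assume "coeff (subst (\<lambda>c. [:c:]) (\<lambda>j. [:comp ?p j, comp q j:]) G) y \<noteq> 0"
    then show "K \<le> y" using low by (meson not_le)
  qed
  show ?thesis unfolding cond_c_def
    using row_nonzero[OF E, of 0] pt_nonzero[OF E] p m0 Ffac ndvd Gp im hS[OF j(1,2)] j(3)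
    unfolding m_def by auto
qed


lemma pairing_st:
  assumes "balanced w" "e0 i + e1 i + e2 i = d"
  shows "3 * pairing i w = (fst w - fst (snd w)) * (3 * int (e0 i) - int d) + (fst (snd w) - snd (snd w)) * (int d - 3 * int (e2 i))"
proof -
  obtain a b c where w: "w = (a, b, c)" by (cases w) auto
  obtain x y z where i: "i = (x, y, z)" by (cases i) auto
  have hc: "c = - a - b" using assms unfolding w i balanced_def by auto
  have hd: "int d = int x + int y + int z" using assms unfolding w i by auto
  show ?thesis unfolding w i pairing_def by (simp add: hc hd algebra_simps)
qed

lemma sgn1:
  fixes s t x y :: int
  assumes "0 \<le> s" "0 \<le> t" "0 < s * x + t * y" "x \<le> 0"
  shows "0 < y" "0 < t"
proof -
  have "s * x \<le> 0" using assms by (simp add: mult_nonneg_nonpos)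
  then have ty: "0 < t * y" using assms by linarith
  then show "0 < y" "0 < t" using assms(2) by (auto simp: zero_less_mult_iff)
qed

lemma ord_st: "ordered w \<Longrightarrow> 0 \<le> fst w - fst (snd w) \<and> 0 \<le> fst (snd w) - snd (snd w)"
  by (cases w) (auto simp: ordered_def)

lemma comb_exist:
  fixes S :: "(nat \<times> nat \<times> nat) set"
  assumes fin: "finite S" and ne: "S \<noteq> {}" and dpos: "0 < d"
    and ex: "\<And>i. i \<in> S \<Longrightarrow> e0 i + e1 i + e2 i = d"
    and w: "balanced w" "ordered w" and pos: "\<forall>i\<in>S. 0 < pairing i w"
    and na: "\<exists>i\<in>S. 3 * e0 i \<le> d" and nb: "\<exists>i\<in>S. d \<le> 3 * e2 i"
  shows "(0 < Min (e0 ` S) \<and> (\<forall>i\<in>S. e0 i = Min (e0 ` S) \<longrightarrow> d < 2 * e1 i + Min (e0 ` S)))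
       \<or> (d < 2 * Min ((\<lambda>i. e0 i + e1 i) ` S) \<and> (\<forall>i\<in>S. e0 i + e1 i = Min ((\<lambda>i. e0 i + e1 i) ` S) \<longrightarrow>
              Min ((\<lambda>i. e0 i + e1 i) ` S) < 2 * e0 i))"
proof -
  define s where "s = fst w - fst (snd w)"
  define t where "t = fst (snd w) - snd (snd w)"
  have st: "0 \<le> s" "0 \<le> t" using ord_st[OF w(2)] unfolding s_def t_def by auto
  have K: "0 < s * (3 * int (e0 i) - int d) + t * (int d - 3 * int (e2 i))" if "i \<in> S" for i
    using pairing_st[OF w(1) ex[OF that]] pos that unfolding s_def t_def by fastforce
  obtain i2 where i2: "i2 \<in> S" "d \<le> 3 * e2 i2" using nb by blast
  obtain i1 where i1: "i1 \<in> S" "3 * e0 i1 \<le> d" using na by blast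
  show ?thesis
  proof (cases "s \<le> t")
    case True
    define M where "M = Min ((\<lambda>i. e0 i + e1 i) ` S)"
    have half: "2 * e2 i < d" if i: "i \<in> S" for i
    proof (rule ccontr)
      assume "\<not> 2 * e2 i < d"
      then have a: "d \<le> 2 * e2 i" by simp
      define U where "U = 3 * int (e0 i) - int d"
      define V where "V = int d - 3 * int (e2 i)"
      have UV1: "2 * U \<le> int d" using a ex[OF i] unfolding U_def V_def by simp
      have UV2: "int d \<le> - 2 * V" using a ex[OF i] unfolding U_def V_def by simp
      note UV = UV1 UV2
      have k: "0 < s * U + t * V" using K[OF i] unfolding U_def V_def .
      have "t * int d \<le> t * (- 2 * V)" using UV st by (intro mult_left_mono) auto
      moreover have "s * int d \<le> t * int d" using True by (intro mult_right_mono) auto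
      moreover have "s * (2 * U) \<le> s * int d" using UV st by (intro mult_left_mono) auto
      ultimately show False using k by (simp add: algebra_simps)
    qed
    obtain jm where jm: "jm \<in> S" "M = e0 jm + e1 jm"
      unfolding M_def using fin ne by (metis (no_types, lifting) Min_in finite_imageI image_iff image_is_empty)
    have Mle: "M \<le> e0 i + e1 i" if "i \<in> S" for i unfolding M_def using fin that by (auto intro: Min_le)
    have d1: "d < 2 * M" using half[OF jm(1)] ex[OF jm(1)] jm(2) by linarith
    have M23: "3 * M \<le> 2 * d" using Mle[OF i2(1)] ex[OF i2(1)] i2(2) by linarith
    have d2: "M < 2 * e0 i" if i: "i \<in> S" "e0 i + e1 i = M" for i
    proof (rule ccontr)
      assume "\<not> M < 2 * e0 i"
      then have a: "2 * e0 i \<le> M" by simp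
      define U where "U = 3 * int (e0 i) - int d"
      define V where "V = int d - 3 * int (e2 i)"
      have UV1: "2 * U \<le> V" using a ex[OF i(1)] i(2) M23 unfolding U_def V_def by simp
      have UV2: "V \<le> 0" using a ex[OF i(1)] i(2) M23 unfolding U_def V_def by simp
      note UV = UV1 UV2
      have k: "0 < s * U + t * V" using K[OF i(1)] unfolding U_def V_def .
      have "s * (2 * U) \<le> s * V" using UV st by (intro mult_left_mono) auto
      moreover have "(s + 2 * t) * V \<le> 0" using UV st by (intro mult_nonneg_nonpos) auto
      ultimately show False using k by (simp add: algebra_simps)
    qed
    show ?thesis using d1 d2 unfolding M_def by blast
  next
    case False
    then have ts: "t < s" by simp
    define m where "m = Min (e0 ` S)"
    obtain jm where jm: "jm \<in> S" "m = e0 jm"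
      unfolding m_def using fin ne by (metis (no_types, lifting) Min_in finite_imageI image_iff image_is_empty)
    have mle: "m \<le> e0 i" if "i \<in> S" for i unfolding m_def using fin that by (auto intro: Min_le)
    have m3: "3 * m \<le> d" using mle[OF i1(1)] i1(2) by linarith
    have mpos: "0 < m"
    proof (rule ccontr)
      assume "\<not> 0 < m"
      then have e00: "e0 jm = 0" using jm by simp
      have k: "0 < s * (- int d) + t * (int d - 3 * int (e2 jm))" using K[OF jm(1)] e00 by simp
      have "t * (int d - 3 * int (e2 jm)) \<le> t * int d" using st by (intro mult_left_mono) auto
      then have "s * int d < t * int d" using k by (simp add: algebra_simps)
      then have "s < t" using dpos by (simp add: mult_less_cancel_right)
      then show False using ts by simp
    qed
    have cc: "d < 2 * e1 i + m" if i: "i \<in> S" "e0 i = m" for i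
    proof -
      define U where "U = 3 * int (e0 i) - int d"
      define V where "V = int d - 3 * int (e2 i)"
      have U0: "U \<le> 0" using m3 i(2) unfolding U_def by simp
      have k: "0 < s * U + t * V" using K[OF i(1)] unfolding U_def V_def .
      have tpos: "0 < t" using sgn1(2)[OF st k U0] .
      have "t * (- U) \<le> s * (- U)" using ts U0 by (intro mult_right_mono) auto
      then have "t * (- U) < t * V" using k by (simp add: algebra_simps)
      then have "- U < V" using tpos by (metis mult_less_cancel_left_pos)
      then have "e2 i < m" using i(2) unfolding U_def V_def by simp
      then show ?thesis using ex[OF i(1)] i(2) m3 by linarith
    qed
    show ?thesis using mpos cc unfolding m_def by blast
  qed
qed


lemma sgn2:
  fixes s t x y :: int
  assumes "0 \<le> s" "0 \<le> t" "0 < s * x + t * y" "y \<le> 0"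
  shows "0 < x" "0 < s"
  using sgn1[of t s y x] assms by (auto simp: add.commute)

definition p210 :: "nat \<times> nat \<times> nat \<Rightarrow> nat \<times> nat \<times> nat" where "p210 i = (e2 i, e1 i, e0 i)"
definition p201 :: "nat \<times> nat \<times> nat \<Rightarrow> nat \<times> nat \<times> nat" where "p201 i = (e2 i, e0 i, e1 i)"
definition p120 :: "nat \<times> nat \<times> nat \<Rightarrow> nat \<times> nat \<times> nat" where "p120 i = (e1 i, e2 i, e0 i)"

lemma swap_prod_lemma:
  fixes s t s' t' a b :: int
  assumes "s * a < t * b" "s' * b < t' * a" "0 < a" "0 < b" "0 \<le> s" "0 \<le> s'"
  shows "s * s' < t * t'"
proof -
  have "0 < t * b" using assms by (smt (verit) mult_nonneg_nonneg)
  have "(s * a) * (s' * b) < (t * b) * (t' * a)"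
    by (rule mult_strict_mono) (use assms \<open>0 < t * b\<close> in auto)
  then have "(s * s') * (a * b) < (t * t') * (a * b)" by (simp add: ac_simps)
  moreover have "0 < a * b" using assms by simp
  ultimately show ?thesis by (simp add: mult_less_cancel_right)
qed

lemma uniq_comb:
  fixes S :: "(nat \<times> nat \<times> nat) set"
  assumes ex: "\<And>i. i \<in> S \<Longrightarrow> e0 i + e1 i + e2 i = d"
    and a0: "\<exists>i\<in>S. 3 * e0 i \<le> d"
    and b0: "\<exists>i\<in>S. d \<le> 3 * e0 i"
    and b2: "\<exists>i\<in>S. d \<le> 3 * e2 i"
    and w: "balanced w" "ordered w" and pos: "\<forall>i\<in>S. 0 < pairing i w"
    and w': "balanced w'" "ordered w'"
    and pi: "\<pi> \<in> {sw12, sw01, p210, p201, p120}"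
    and pos': "\<forall>i\<in>S. 0 < pairing (\<pi> i) w'"
  shows False
proof -
  define s where "s = fst w - fst (snd w)"
  define t where "t = fst (snd w) - snd (snd w)"
  define s' where "s' = fst w' - fst (snd w')"
  define t' where "t' = fst (snd w') - snd (snd w')"
  have st: "0 \<le> s" "0 \<le> t" "0 \<le> s'" "0 \<le> t'" using ord_st[OF w(2)] ord_st[OF w'(2)]
    unfolding s_def t_def s'_def t'_def by auto
  define u0 where "u0 i = 3 * int (e0 i) - int d" for i
  define u1 where "u1 i = 3 * int (e1 i) - int d" for i
  define u2 where "u2 i = 3 * int (e2 i) - int d" for i
  have usum: "u0 i + u1 i + u2 i = 0" if "i \<in> S" for i
    using ex[OF that] unfolding u0_def u1_def u2_def by simp
  have F1: "0 < s * u0 i + t * (- u2 i)" if "i \<in> S" for i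
    using pairing_st[OF w(1) ex[OF that]] pos that unfolding s_def t_def u0_def u2_def by fastforce
  have pex: "e0 (\<pi> i) + e1 (\<pi> i) + e2 (\<pi> i) = d" if "i \<in> S" for i
    using pi ex[OF that] by (auto simp: sw12_def sw01_def p210_def p201_def p120_def)
  have F2: "0 < s' * (3 * int (e0 (\<pi> i)) - int d) + t' * (int d - 3 * int (e2 (\<pi> i)))" if "i \<in> S" for i
    using pairing_st[OF w'(1) pex[OF that]] pos' that unfolding s'_def t'_def by fastforce
  obtain ia where ia: "ia \<in> S" "u0 ia \<le> 0" using a0 unfolding u0_def by force
  obtain ib where ib: "ib \<in> S" "0 \<le> u0 ib" using b0 unfolding u0_def by force
  obtain ic where ic: "ic \<in> S" "0 \<le> u2 ic" using b2 unfolding u2_def by force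
  consider "\<pi> = sw12" | "\<pi> = sw01" | "\<pi> = p210" | "\<pi> = p201" | "\<pi> = p120" using pi by auto
  then show False
  proof cases
    case 1
    have G: "0 < s' * u0 i + t' * (- u1 i)" if "i \<in> S" for i
      using F2[OF that] unfolding 1 sw12_def u0_def u1_def by simp
    have "0 < - u2 ia" using sgn1(1)[OF st(1,2) F1[OF ia(1)] ia(2)] .
    moreover have "0 < - u1 ia" using sgn1(1)[OF st(3,4) G[OF ia(1)] ia(2)] .
    ultimately show False using usum[OF ia(1)] ia(2) by linarith
  next
    case 2
    have G: "0 < s' * u1 i + t' * (- u2 i)" if "i \<in> S" for i
      using F2[OF that] unfolding 2 sw01_def u1_def u2_def by simp
    have y: "- u2 ic \<le> 0" using ic by simp
    have "0 < u0 ic" using sgn2(1)[OF st(1,2) F1[OF ic(1)] y] .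
    moreover have "0 < u1 ic" using sgn2(1)[OF st(3,4) G[OF ic(1)] y] .
    ultimately show False using usum[OF ic(1)] ic(2) by linarith
  next
    case 4
    have G: "0 < s' * u2 i + t' * (- u1 i)" if "i \<in> S" for i
      using F2[OF that] unfolding 4 p201_def u2_def u1_def by simp
    have "0 < - u2 ia" using sgn1(1)[OF st(1,2) F1[OF ia(1)] ia(2)] .
    then have x: "u2 ia \<le> 0" by simp
    have "0 < - u1 ia" using sgn1(1)[OF st(3,4) G[OF ia(1)] x] .
    then show False using usum[OF ia(1)] ia(2) \<open>0 < - u2 ia\<close> by linarith
  next
    case 5
    have G: "0 < s' * u1 i + t' * (- u0 i)" if "i \<in> S" for i
      using F2[OF that] unfolding 5 p120_def u1_def u0_def by simp
    have y: "- u2 ic \<le> 0" using ic by simp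
    have "0 < u0 ic" using sgn2(1)[OF st(1,2) F1[OF ic(1)] y] .
    then have y': "- u0 ic \<le> 0" by simp
    have "0 < u1 ic" using sgn2(1)[OF st(3,4) G[OF ic(1)] y'] .
    then show False using usum[OF ic(1)] ic(2) \<open>0 < u0 ic\<close> by linarith
  next
    case 3
    have G: "0 < s' * u2 i + t' * (- u0 i)" if "i \<in> S" for i
      using F2[OF that] unfolding 3 p210_def u2_def u0_def by simp
    have a2: "0 < - u2 ia" using sgn1(1)[OF st(1,2) F1[OF ia(1)] ia(2)] .
    then have x: "u2 ia \<le> 0" by simp
    have a0': "0 < - u0 ia" using sgn1(1)[OF st(3,4) G[OF ia(1)] x] .
    have i1: "s * (- u0 ia) < t * (- u2 ia)" using F1[OF ia(1)] by (simp add: algebra_simps)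
    have i2: "s' * (- u2 ia) < t' * (- u0 ia)" using G[OF ia(1)] by (simp add: algebra_simps)
    have lt1: "s * s' < t * t'" by (rule swap_prod_lemma[OF i1 i2 a0' a2 st(1) st(3)])
    have y: "- u0 ib \<le> 0" using ib by simp
    have b2': "0 < u2 ib" using sgn2(1)[OF st(3,4) G[OF ib(1)] y] .
    then have y2: "- u2 ib \<le> 0" by simp
    have b0': "0 < u0 ib" using sgn2(1)[OF st(1,2) F1[OF ib(1)] y2] .
    have j1: "t * u2 ib < s * u0 ib" using F1[OF ib(1)] by (simp add: algebra_simps)
    have j2: "t' * u0 ib < s' * u2 ib" using G[OF ib(1)] by (simp add: algebra_simps)
    have lt2: "t * t' < s * s'" by (rule swap_prod_lemma[OF j1 j2 b2' b0' st(2) st(4)])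
    show False using lt1 lt2 by simp
  qed
qed


lemma dot_comm: "dot u v = dot v u"
  by (simp add: dot_def ac_simps)

lemma dot_cross1: "dot (cross a b) a = 0"
  by (simp add: dot_def cross_def algebra_simps)
lemma dot_cross2: "dot (cross a b) b = 0"
  by (simp add: dot_def cross_def algebra_simps)

lemma cross_cyc1: "dot (cross a2 a0) a1 = dot (cross a1 a2) a0"
  by (simp add: dot_def cross_def algebra_simps)
lemma cross_cyc2: "dot (cross a0 a1) a2 = dot (cross a1 a2) a0"
  by (simp add: dot_def cross_def algebra_simps)

lemma triple_cross:
  assumes "dot l a = 0" "dot l b = 0"
  shows "cross l (cross a b) = (0, 0, 0)"
proof -
  have "cross l (cross a b) = (comp a 0 * dot l b - comp b 0 * dot l a, comp a 1 * dot l b - comp b 1 * dot l a,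
      comp a 2 * dot l b - comp b 2 * dot l a)"
    by (simp add: cross_def dot_def algebra_simps)
  then show ?thesis using assms by simp
qed

lemma vec_nonzero_cases:
  "(v::'k::zero vec3) \<noteq> (0, 0, 0) \<Longrightarrow> comp v 0 \<noteq> 0 \<or> comp v 1 \<noteq> 0 \<or> comp v 2 \<noteq> 0"
  by (cases v) auto

lemma prop_of_cross0:
  fixes u v :: "'k::field vec3"
  assumes "cross u v = (0, 0, 0)" "v \<noteq> (0, 0, 0)" "u \<noteq> (0, 0, 0)"
  shows "proportional u v"
proof -
  obtain a b c where u: "u = (a, b, c)" by (cases u) auto
  obtain x y z where v: "v = (x, y, z)" by (cases v) auto
  have eqs: "b * z = c * y" "c * x = a * z" "a * y = b * x" using assms(1) unfolding u v cross_def by auto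
  have nz: "x \<noteq> 0 \<or> y \<noteq> 0 \<or> z \<noteq> 0" using assms(2) unfolding v by auto
  have unz: "a \<noteq> 0 \<or> b \<noteq> 0 \<or> c \<noteq> 0" using assms(3) unfolding u by auto
  show ?thesis
  proof (cases "x \<noteq> 0")
    case True
    have ue: "u = (a / x * comp v 0, a / x * comp v 1, a / x * comp v 2)" unfolding u v using True eqs
      by (auto simp: field_simps)
    moreover have "a / x \<noteq> 0" using True unz eqs unfolding u by (auto simp: field_simps)
    ultimately show ?thesis unfolding proportional_def by blast
  next
    case False
    show ?thesis
    proof (cases "y \<noteq> 0")
      case True
      have "u = (b / y * comp v 0, b / y * comp v 1, b / y * comp v 2)" unfolding u v using True False eqs
        by (auto simp: field_simps)
      moreover have "b / y \<noteq> 0" using True False unz eqs unfolding u by (auto simp: field_simps)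
      ultimately show ?thesis unfolding proportional_def by blast
    next
      case False2: False
      then have zz: "z \<noteq> 0" using nz False by auto
      have "u = (c / z * comp v 0, c / z * comp v 1, c / z * comp v 2)" unfolding u v using zz False False2 eqs
        by (auto simp: field_simps)
      moreover have "c / z \<noteq> 0" using zz False False2 unz eqs unfolding u by (auto simp: field_simps)
      ultimately show ?thesis unfolding proportional_def by blast
    qed
  qed
qed

lemma prop_cross0: "proportional u v \<Longrightarrow> cross u v = (0, 0, 0)"
  by (auto simp: proportional_def cross_def algebra_simps)

lemma prop_nonzero: "proportional u (v::'k::field vec3) \<Longrightarrow> v \<noteq> (0,0,0) \<Longrightarrow> u \<noteq> (0,0,0)"
  by (cases v) (auto simp: proportional_def)

lemma prop_nonzero2: "proportional u (v::'k::field vec3) \<Longrightarrow> u \<noteq> (0,0,0) \<Longrightarrow> v \<noteq> (0,0,0)"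
  by (cases v) (auto simp: proportional_def)

lemma prop_sym: "proportional u (v::'k::field vec3) \<Longrightarrow> proportional v u"
proof -
  assume "proportional u v"
  then obtain c where c: "c \<noteq> 0" "u = (c * comp v 0, c * comp v 1, c * comp v 2)" by (auto simp: proportional_def)
  then have "v = (inverse c * comp u 0, inverse c * comp u 1, inverse c * comp u 2)"
    by (cases v) auto
  then show "proportional v u" using c(1) unfolding proportional_def by (intro exI[of _ "inverse c"]) auto
qed

lemma prop_trans: "proportional u (v::'k::field vec3) \<Longrightarrow> proportional v w \<Longrightarrow> proportional u w"
proof -
  assume "proportional u v" "proportional v w"
  then obtain c c' where c: "c \<noteq> 0" "u = (c * comp v 0, c * comp v 1, c * comp v 2)"
    and c': "c' \<noteq> 0" "v = (c' * comp w 0, c' * comp w 1, c' * comp w 2)" by (auto simp: proportional_def)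
  then have "u = ((c * c') * comp w 0, (c * c') * comp w 1, (c * c') * comp w 2)" by simp
  then show "proportional u w" using c c' unfolding proportional_def by (intro exI[of _ "c * c'"]) auto
qed

lemma prop_dot0_right: "proportional u (v::'k::field vec3) \<Longrightarrow> dot x u = 0 \<longleftrightarrow> dot x v = 0"
  using prop_dot0[of u v x] by (simp add: dot_comm)

lemma cross_prop:
  fixes l a b :: "'k::field vec3"
  assumes "l \<noteq> (0, 0, 0)" "dot l a = 0" "dot l b = 0" "cross a b \<noteq> (0, 0, 0)"
  shows "proportional (cross a b) l"
  by (rule prop_of_cross0) (use triple_cross[OF assms(2,3)] assms in \<open>auto simp: cross_def algebra_simps\<close>)

lemma cross_comm_zero: "cross a b = (0,0,0) \<longleftrightarrow> cross b a = ((0,0,0)::'k::comm_ring_1 vec3)"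
  by (auto simp: cross_def algebra_simps)

lemma not_prop_cross:
  fixes u v :: "'k::field vec3"
  assumes "\<not> proportional u v" "u \<noteq> (0,0,0)" "v \<noteq> (0,0,0)"
  shows "cross u v \<noteq> (0,0,0)"
  using prop_of_cross0[of u v] assms by auto

lemma on_two_lines:
  fixes l l' v :: "'k::field vec3"
  assumes "\<not> proportional l' l" "l \<noteq> (0,0,0)" "l' \<noteq> (0,0,0)" "v \<noteq> (0,0,0)" "dot l v = 0" "dot l' v = 0"
  shows "proportional v (cross l l')"
proof -
  have "cross l' l \<noteq> (0,0,0)" by (rule not_prop_cross[OF assms(1,3,2)])
  then have c: "cross l l' \<noteq> (0,0,0)" using cross_comm_zero by blast
  have "proportional (cross l l') v"
    by (rule cross_prop[OF assms(4)]) (use assms c in \<open>simp_all add: dot_comm\<close>)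
  then show ?thesis by (rule prop_sym)
qed

lemma other_point:
  fixes l v :: "'k::field vec3"
  assumes "l \<noteq> (0,0,0)" "v \<noteq> (0,0,0)" "dot l v = 0"
  shows "\<exists>R. dot l R = 0 \<and> R \<noteq> (0,0,0) \<and> \<not> proportional R v"
proof -
  have key: "cross (cross l e) v = (0,0,0) \<Longrightarrow> dot l v = 0 \<Longrightarrow> dot e v \<noteq> 0 \<Longrightarrow> False" for e
  proof -
    assume a: "cross (cross l e) v = (0,0,0)" "dot l v = 0" "dot e v \<noteq> 0"
    have "cross (cross l e) v = (comp e 0 * dot l v - comp l 0 * dot e v, comp e 1 * dot l v - comp l 1 * dot e v,
        comp e 2 * dot l v - comp l 2 * dot e v)"
      by (simp add: cross_def dot_def algebra_simps)
    then have "comp l 0 * dot e v = 0" "comp l 1 * dot e v = 0" "comp l 2 * dot e v = 0" using a by auto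
    then have "l = (0,0,0)" using a(3) by (cases l) auto
    then show False using assms by simp
  qed
  show ?thesis
  proof -
    note True = assms(3)
    have "dot (1,0,0) v \<noteq> 0 \<or> dot (0,1,0) v \<noteq> 0 \<or> dot (0,0,1) v \<noteq> 0" using assms(2) by (cases v) (auto simp: dot_def)
    then obtain e where e: "dot e v \<noteq> 0" by blast
    have c: "cross (cross l e) v \<noteq> (0,0,0)" using key[OF _ True e] by blast
    have "cross l e \<noteq> (0,0,0)" using c by (auto simp: cross_def)
    moreover have "dot l (cross l e) = 0" using dot_cross1[of l e] by (simp add: dot_comm)
    moreover have "\<not> proportional (cross l e) v" using c prop_cross0 by blast
    ultimately show ?thesis by blast
  qed
qed


definition mkE :: "'k::comm_ring_1 vec3 \<Rightarrow> 'k vec3 \<Rightarrow> 'k vec3 \<Rightarrow> 'k coordsys" where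
  "mkE a0 a1 a2 = (cross a1 a2, cross a2 a0, cross a0 a1)"

definition adapted :: "'k::field coordsys \<Rightarrow> 'k vec3 \<Rightarrow> 'k vec3 \<Rightarrow> bool" where
  "adapted E l p \<longleftrightarrow> proportional (fst E) l \<and> dot (fst E) p = 0 \<and> dot (fst (snd E)) p = 0"

lemma det_mkE: "det3 (mkE a0 a1 a2) = dot (cross a1 a2) a0 ^ 2"
proof -
  obtain x0 x1 x2 where r0: "a0 = (x0, x1, x2)" by (cases a0) auto
  obtain y0 y1 y2 where r1: "a1 = (y0, y1, y2)" by (cases a1) auto
  obtain z0 z1 z2 where r2: "a2 = (z0, z1, z2)" by (cases a2) auto
  show ?thesis unfolding r0 r1 r2
    by (simp add: mkE_def det3_def cross_def dot_def power2_eq_square algebra_simps)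
qed

lemma coord_mkE:
  fixes a0 :: "'k::field vec3"
  shows "dot (cross a1 a2) a0 \<noteq> 0 \<Longrightarrow> coord_sys (mkE a0 a1 a2)"
  by (simp add: coord_sys_def det_mkE)

lemma indep:
  fixes x :: "'k::field vec3"
  assumes "dot x a1 = 0" "dot x a2 = 0" "dot x a0 \<noteq> 0" "cross a1 a2 \<noteq> (0,0,0)"
  shows "dot (cross a1 a2) a0 \<noteq> 0"
proof -
  have x0: "x \<noteq> (0,0,0)" using assms(3) by (auto simp: dot_def)
  have "proportional (cross a1 a2) x" by (rule cross_prop[OF x0 assms(1,2,4)])
  then obtain c where "c \<noteq> 0" "dot (cross a1 a2) a0 = c * dot x a0" using prop_dot by blast
  then show ?thesis using assms(3) by simp
qed

lemma cross_nz_of_D: "dot (cross a1 a2) a0 \<noteq> 0 \<Longrightarrow> cross a1 a2 \<noteq> ((0,0,0)::'k::field vec3)"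
  by (auto simp: dot_def)

lemma line_through:
  fixes L :: "'k::field vec3"
  assumes "L \<noteq> (0,0,0)" "dot L a = 0" "dot L b = 0" "cross a b \<noteq> (0,0,0)"
  shows "proportional (cross a b) L"
  by (rule cross_prop[OF assms])

lemma flag1:
  fixes l :: "'k::field vec3"
  assumes "l \<noteq> (0,0,0)" "dot l a1 = 0" "dot l a2 = 0" "dot (cross a1 a2) a0 \<noteq> 0"
  shows "adapted (mkE a0 a1 a2) l a2"
  unfolding adapted_def mkE_def
  using line_through[OF assms(1-3) cross_nz_of_D[OF assms(4)]] dot_cross2[of a1 a2] dot_cross1[of a2 a0]
  by simp

lemma D_cycl:
  "dot (cross a2 a0) a1 = dot (cross a1 a2) a0" "dot (cross a0 a1) a2 = dot (cross a1 a2) a0"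
  by (rule cross_cyc1, rule cross_cyc2)

lemma bruhat:
  fixes l p l' p' :: "'k::field vec3"
  assumes l: "l \<noteq> (0,0,0)" and p: "p \<noteq> (0,0,0)" and lp: "dot l p = 0"
    and l': "l' \<noteq> (0,0,0)" and p': "p' \<noteq> (0,0,0)" and lp': "dot l' p' = 0"
    and diff: "\<not> (proportional l' l \<and> proportional p' p)"
  shows "\<exists>E. coord_sys E \<and> adapted E l p \<and>
    (adapted (swap12 E) l' p' \<or> adapted (swap01 E) l' p' \<or> adapted (swap12 (swap01 E)) l' p'
     \<or> adapted (swap01 (swap12 E)) l' p' \<or> adapted (swap01 (swap12 (swap01 E))) l' p')"
proof (cases "proportional l' l")
  case True
  then have np: "\<not> proportional p' p" using diff by blast
  obtain R where R: "dot l R \<noteq> 0"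
  proof -
    have "dot l (1,0,0) \<noteq> 0 \<or> dot l (0,1,0) \<noteq> 0 \<or> dot l (0,0,1) \<noteq> 0" using l by (cases l) (auto simp: dot_def)
    then show ?thesis using that by blast
  qed
  have lp'': "dot l p' = 0" using lp' prop_dot0[OF True] by simp
  have l'p: "dot l' p = 0" using lp prop_dot0[OF True] by simp
  have cr: "cross p' p \<noteq> (0,0,0)" by (rule not_prop_cross[OF np p' p])
  have D: "dot (cross p' p) R \<noteq> 0" by (rule indep[OF lp'' lp R cr])
  let ?E = "mkE R p' p"
  have "adapted (swap12 ?E) l' p'"
    unfolding adapted_def swap12_def mkE_def
    using line_through[OF l' lp' l'p cr] dot_cross1[of p' p] dot_cross2[of R p'] by simp
  then show ?thesis using coord_mkE[OF D] flag1[OF l lp'' lp D] by blast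
next
  case nl: False
  have Q: "cross l l' \<noteq> (0,0,0)"
    using not_prop_cross[OF nl l' l] cross_comm_zero by blast
  have both: "proportional v (cross l l')" if "v \<noteq> (0,0,0)" "dot l v = 0" "dot l' v = 0" for v
    by (rule on_two_lines[OF nl l l' that])
  show ?thesis
  proof (cases "proportional p' p")
    case pp: True
    have l'p: "dot l' p = 0" using lp' prop_dot0_right[OF pp] by simp
    obtain R1 where R1: "dot l R1 = 0" "R1 \<noteq> (0,0,0)" "\<not> proportional R1 p" using other_point[OF l p lp] by blast
    obtain R0 where R0: "dot l' R0 = 0" "R0 \<noteq> (0,0,0)" "\<not> proportional R0 p" using other_point[OF l' p l'p] by blast
    have lR0: "dot l R0 \<noteq> 0"
    proof
      assume "dot l R0 = 0"
      then have "proportional R0 (cross l l')" using both R0 by blast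
      moreover have "proportional p (cross l l')" using both p lp l'p by blast
      ultimately have "proportional R0 p" using prop_trans prop_sym by blast
      then show False using R0 by simp
    qed
    have cr: "cross R1 p \<noteq> (0,0,0)" by (rule not_prop_cross[OF R1(3) R1(2) p])
    have D: "dot (cross R1 p) R0 \<noteq> 0" by (rule indep[OF R1(1) lp lR0 cr])
    let ?E = "mkE R0 R1 p"
    have D2: "dot (cross p R0) R1 \<noteq> 0" using D D_cycl(1)[of p R0 R1] by simp
    have "adapted (swap01 ?E) l' p'"
      unfolding adapted_def swap01_def mkE_def
      using line_through[OF l' l'p R0(1) cross_nz_of_D[OF D2]] dot_cross1[of p R0] dot_cross2[of R1 p]
        prop_dot0_right[OF pp] by simp
    then show ?thesis using coord_mkE[OF D] flag1[OF l R1(1) lp D] by blast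
  next
    case np: False
    show ?thesis
    proof (cases "dot l' p = 0")
      case l'p: True
      obtain R where R: "dot l R = 0" "R \<noteq> (0,0,0)" "\<not> proportional R p" using other_point[OF l p lp] by blast
      have lp'': "dot l p' \<noteq> 0"
      proof
        assume "dot l p' = 0"
        then have "proportional p' (cross l l')" using both p' lp' by blast
        moreover have "proportional p (cross l l')" using both p lp l'p by blast
        ultimately have "proportional p' p" using prop_trans prop_sym by blast
        then show False using np by simp
      qed
      have cr: "cross R p \<noteq> (0,0,0)" by (rule not_prop_cross[OF R(3) R(2) p])
      have D: "dot (cross R p) p' \<noteq> 0" by (rule indep[OF R(1) lp lp'' cr])
      let ?E = "mkE p' R p"
      have D2: "dot (cross p p') R \<noteq> 0" using D D_cycl(1)[of p p' R] by simp
      have "adapted (swap12 (swap01 ?E)) l' p'"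
        unfolding adapted_def swap01_def swap12_def mkE_def
        using line_through[OF l' l'p lp' cross_nz_of_D[OF D2]] dot_cross2[of p p'] dot_cross1[of p' R] by simp
      then show ?thesis using coord_mkE[OF D] flag1[OF l R(1) lp D] by blast
    next
      case l'p: False
      show ?thesis
      proof (cases "dot l p' = 0")
        case lp'': True
        obtain R where R: "dot l' R = 0" "R \<noteq> (0,0,0)" "\<not> proportional R p'" using other_point[OF l' p' lp'] by blast
        have lR: "dot l R \<noteq> 0"
        proof
          assume "dot l R = 0"
          then have "proportional R (cross l l')" using both R by blast
          moreover have "proportional p' (cross l l')" using both p' lp'' lp' by blast
          ultimately have "proportional R p'" using prop_trans prop_sym by blast
          then show False using R by simp
        qed
        have cr: "cross p' p \<noteq> (0,0,0)" by (rule not_prop_cross[OF np p' p])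
        have D: "dot (cross p' p) R \<noteq> 0" by (rule indep[OF lp'' lp lR cr])
        let ?E = "mkE R p' p"
        have D2: "dot (cross R p') p \<noteq> 0" using D D_cycl(2)[of R p' p] by simp
        have "adapted (swap01 (swap12 ?E)) l' p'"
          unfolding adapted_def swap01_def swap12_def mkE_def
          using line_through[OF l' R(1) lp' cross_nz_of_D[OF D2]] dot_cross2[of R p'] dot_cross1[of p' p] by simp
        then show ?thesis using coord_mkE[OF D] flag1[OF l lp'' lp D] by blast
      next
        case lp'': False
        let ?Q = "cross l l'"
        have lQ: "dot l ?Q = 0" using dot_cross1[of l l'] by (simp add: dot_comm)
        have l'Q: "dot l' ?Q = 0" using dot_cross2[of l l'] by (simp add: dot_comm)
        have nQp: "\<not> proportional ?Q p"
        proof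
          assume "proportional ?Q p"
          then have "proportional p ?Q" by (rule prop_sym)
          then have "dot l' p = 0" using l'Q prop_dot0_right by blast
          then show False using l'p by simp
        qed
        have cr: "cross ?Q p \<noteq> (0,0,0)" by (rule not_prop_cross[OF nQp Q p])
        have D: "dot (cross ?Q p) p' \<noteq> 0" by (rule indep[OF lQ lp lp'' cr])
        let ?E = "mkE p' ?Q p"
        have D2: "dot (cross p' ?Q) p \<noteq> 0" using D D_cycl(2)[of p' ?Q p] by simp
        have "adapted (swap01 (swap12 (swap01 ?E))) l' p'"
          unfolding adapted_def swap01_def swap12_def mkE_def
          using line_through[OF l' lp' l'Q cross_nz_of_D[OF D2]] dot_cross1[of p' ?Q] dot_cross2[of p p'] by simp
        then show ?thesis using coord_mkE[OF D] flag1[OF l lQ lp D] by blast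
      qed
    qed
  qed
qed


lemma supp_facts:
  fixes F :: "'k::field mpoly"
  assumes "coord_sys E" "is_form d F"
  shows "finite (support_in d E F)" "support_in d E F \<noteq> {}" "\<And>i. i \<in> support_in d E F \<Longrightarrow> e0 i + e1 i + e2 i = d"
proof -
  show "finite (support_in d E F)" by (rule support_finite)
  show "support_in d E F \<noteq> {}" by (rule support_nonempty[OF assms])
  show "\<And>i. i \<in> support_in d E F \<Longrightarrow> e0 i + e1 i + e2 i = d" by (rule support_exps)
qed

lemma inst_perm:
  assumes "instability d F E' w" "support_in d E' F = \<pi> ` S"
  shows "\<forall>i\<in>S. 0 < pairing (\<pi> i) w"
  using assms by (auto simp: instability_def)

lemma comp_p120: "sw12 (sw01 i) = p120 i" by (cases i) (simp add: sw12_def sw01_def p120_def)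
lemma comp_p201: "sw01 (sw12 i) = p201 i" by (cases i) (simp add: sw12_def sw01_def p201_def)
lemma comp_p210: "sw01 (sw12 (sw01 i)) = p210 i" by (cases i) (simp add: sw12_def sw01_def p210_def)

lemma fst_row_simps: "fst E = row E 0" "fst (snd E) = row E 1" by (simp_all add: row0 row1 row1')

lemma part_i_core:
  fixes F :: "'k::field mpoly"
  assumes E: "coord_sys E" and F: "is_form d F" and d: "0 < d" and inst: "instability d F E w"
  shows "cond_a d F (row E 0) \<or> cond_b d F (pt E 2) \<or> cond_c d F (row E 0) (pt E 2) \<or> cond_d d F (row E 0) (pt E 2)"
proof -
  note sf = supp_facts[OF E F]
  have w: "balanced w" "ordered w" "\<forall>i\<in>support_in d E F. 0 < pairing i w" using inst by (auto simp: instability_def)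
  show ?thesis
  proof (cases "\<forall>i\<in>support_in d E F. d < 3 * e0 i")
    case True then show ?thesis using cond_a_of[OF E F] by blast
  next
    case na: False
    show ?thesis
    proof (cases "\<forall>i\<in>support_in d E F. 3 * e2 i < d")
      case True then show ?thesis using cond_b_of[OF E F] by blast
    next
      case nb: False
      have na': "\<exists>i\<in>support_in d E F. 3 * e0 i \<le> d" using na by (auto simp: not_less)
      have nb': "\<exists>i\<in>support_in d E F. d \<le> 3 * e2 i" using nb by (auto simp: not_less)
      from comb_exist[OF sf(1,2) d sf(3) w na' nb'] show ?thesis
        using cond_c_of[OF E F] cond_d_of[OF E F] by blast
    qed
  qed
qed

theorem proposition2p6:
  fixes F :: "'k::field mpoly" and d :: nat
  assumes perfect: "perfect_field TYPE('k)"
    and form: "is_form d F"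
    and deg: "d \<ge> 3"
    and unstable: "\<not> semistable d F"
  shows
    "((\<exists>l. cond_a d F l) \<or> (\<exists>p. cond_b d F p) \<or>
      (\<exists>l p. cond_c d F l p) \<or> (\<exists>l p. cond_d d F l p))
   \<and> (\<forall>l E. cond_a d F l \<and> coord_sys E \<and> proportional (fst E) l
        \<longrightarrow> instability d F E (2, -1, -1))
   \<and> (\<forall>p E. cond_b d F p \<and> coord_sys E \<and> dot (fst E) p = 0 \<and> dot (fst (snd E)) p = 0
        \<longrightarrow> instability d F E (1, 1, -2))
   \<and> ((\<not> (\<exists>l. cond_a d F l) \<and> \<not> (\<exists>p. cond_b d F p)) \<longrightarrow>
      (\<exists>l p. l \<noteq> (0, 0, 0) \<and> p \<noteq> (0, 0, 0) \<and> dot l p = 0 \<and> (cond_c d F l p \<or> cond_d d F l p) \<and>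
         (\<forall>E. coord_sys E \<and> proportional (fst E) l \<and> dot (fst E) p = 0 \<and> dot (fst (snd E)) p = 0
              \<longrightarrow> (\<exists>w. instability d F E w)) \<and>
         (\<forall>l' p'. l' \<noteq> (0, 0, 0) \<and> p' \<noteq> (0, 0, 0) \<and> dot l' p' = 0 \<and> (cond_c d F l' p' \<or> cond_d d F l' p') \<and>
            (\<forall>E. coord_sys E \<and> proportional (fst E) l' \<and> dot (fst E) p' = 0 \<and> dot (fst (snd E)) p' = 0
                 \<longrightarrow> (\<exists>w. instability d F E w))
            \<longrightarrow> proportional l' l \<and> proportional p' p)))"
proof -
  have d: "0 < d" using deg by simp
  obtain E w where inst: "instability d F E w" using unstable by (auto simp: semistable_def)
  have E: "coord_sys E" using inst by (simp add: instability_def)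
  note core = part_i_core[OF E form d inst]
  have P1: "(\<exists>l. cond_a d F l) \<or> (\<exists>p. cond_b d F p) \<or> (\<exists>l p. cond_c d F l p) \<or> (\<exists>l p. cond_d d F l p)"
    using core by blast
  have P2: "\<forall>l E. cond_a d F l \<and> coord_sys E \<and> proportional (fst E) l \<longrightarrow> instability d F E (2, -1, -1)"
  proof (intro allI impI)
    fix l E assume a: "cond_a d F l \<and> coord_sys E \<and> proportional (fst E) l"
    then have E': "coord_sys E" by simp
    have pr: "proportional (row E 0) l" using a by (simp add: row0)
    have h: "\<forall>i\<in>support_in d E F. d < 3 * e0 i"
      using cond_a_to[OF E' form _ pr] a by blast
    have "\<forall>i\<in>support_in d E F. 0 < pairing i (2, -1, -1)"
    proof
      fix i assume i: "i \<in> support_in d E F"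
      have "e0 i + e1 i + e2 i = d" by (rule support_exps[OF i])
      then show "0 < pairing i (2, -1, -1)" using h i by (cases i) (auto simp: pairing_def)
    qed
    then show "instability d F E (2, -1, -1)" using E' by (simp add: instability_def balanced_def ordered_def)
  qed
  have P3: "\<forall>p E. cond_b d F p \<and> coord_sys E \<and> dot (fst E) p = 0 \<and> dot (fst (snd E)) p = 0 \<longrightarrow> instability d F E (1, 1, -2)"
  proof (intro allI impI)
    fix p E assume a: "cond_b d F p \<and> coord_sys E \<and> dot (fst E) p = 0 \<and> dot (fst (snd E)) p = 0"
    then have E': "coord_sys E" by simp
    have q0: "dot (row E 0) p = 0" using a by (simp add: row0)
    have q1: "dot (row E 1) p = 0" using a by (simp add: row1')
    have h: "\<forall>i\<in>support_in d E F. 3 * e2 i < d"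
      using cond_b_to[OF E' form _ q0 q1] a by blast
    have "\<forall>i\<in>support_in d E F. 0 < pairing i (1, 1, -2)"
    proof
      fix i assume i: "i \<in> support_in d E F"
      have "e0 i + e1 i + e2 i = d" by (rule support_exps[OF i])
      then show "0 < pairing i (1, 1, -2)" using h i by (cases i) (auto simp: pairing_def)
    qed
    then show "instability d F E (1, 1, -2)" using E' by (simp add: instability_def balanced_def ordered_def)
  qed
  have P4: "(\<not> (\<exists>l. cond_a d F l) \<and> \<not> (\<exists>p. cond_b d F p)) \<longrightarrow>
      (\<exists>l p. l \<noteq> (0, 0, 0) \<and> p \<noteq> (0, 0, 0) \<and> dot l p = 0 \<and> (cond_c d F l p \<or> cond_d d F l p) \<and>
         (\<forall>E. coord_sys E \<and> proportional (fst E) l \<and> dot (fst E) p = 0 \<and> dot (fst (snd E)) p = 0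
              \<longrightarrow> (\<exists>w. instability d F E w)) \<and>
         (\<forall>l' p'. l' \<noteq> (0, 0, 0) \<and> p' \<noteq> (0, 0, 0) \<and> dot l' p' = 0 \<and> (cond_c d F l' p' \<or> cond_d d F l' p') \<and>
            (\<forall>E. coord_sys E \<and> proportional (fst E) l' \<and> dot (fst E) p' = 0 \<and> dot (fst (snd E)) p' = 0
                 \<longrightarrow> (\<exists>w. instability d F E w))
            \<longrightarrow> proportional l' l \<and> proportional p' p))"
  proof
    assume nab: "\<not> (\<exists>l. cond_a d F l) \<and> \<not> (\<exists>p. cond_b d F p)"
    let ?l = "row E 0" and ?p = "pt E 2"
    have cd: "cond_c d F ?l ?p \<or> cond_d d F ?l ?p" using core nab by blast
    have l0: "?l \<noteq> (0,0,0)" by (rule row_nonzero[OF E]) simp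
    have p0: "?p \<noteq> (0,0,0)" by (rule pt_nonzero[OF E])
    have lp: "dot ?l ?p = 0" using dot_row_pt[OF E] by simp
    have q0: "dot (row E 0) ?p = 0" using dot_row_pt[OF E, of 0 2] by simp
    have q1: "dot (row E 1) ?p = 0" using dot_row_pt[OF E, of 1 2] by simp
    have Ead: "proportional (fst E) ?l" "dot (fst E) ?p = 0" "dot (fst (snd E)) ?p = 0"
      using prop_refl'[of "fst E"] q0 q1 by (simp_all add: row0 row1 row1')
    have destab: "\<forall>E'. coord_sys E' \<and> proportional (fst E') ?l \<and> dot (fst E') ?p = 0 \<and> dot (fst (snd E')) ?p = 0
              \<longrightarrow> (\<exists>w. instability d F E' w)"
    proof (intro allI impI)
      fix E' assume a: "coord_sys E' \<and> proportional (fst E') ?l \<and> dot (fst E') ?p = 0 \<and> dot (fst (snd E')) ?p = 0"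
      have "instability d F E' w"
        by (rule borel[OF form E Ead _ _ _ _ p0 inst]) (use a in auto)
      then show "\<exists>w. instability d F E' w" by blast
    qed
    have uniq: "proportional l' ?l \<and> proportional p' ?p"
      if h: "l' \<noteq> (0, 0, 0) \<and> p' \<noteq> (0, 0, 0) \<and> dot l' p' = 0 \<and> (cond_c d F l' p' \<or> cond_d d F l' p') \<and>
            (\<forall>E. coord_sys E \<and> proportional (fst E) l' \<and> dot (fst E) p' = 0 \<and> dot (fst (snd E)) p' = 0
                 \<longrightarrow> (\<exists>w. instability d F E w))" for l' p'
    proof (rule ccontr)
      assume ndiff: "\<not> (proportional l' ?l \<and> proportional p' ?p)"
      obtain E0 where E0: "coord_sys E0" "adapted E0 ?l ?p"
        and alt: "adapted (swap12 E0) l' p' \<or> adapted (swap01 E0) l' p' \<or> adapted (swap12 (swap01 E0)) l' p'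
         \<or> adapted (swap01 (swap12 E0)) l' p' \<or> adapted (swap01 (swap12 (swap01 E0))) l' p'"
        using bruhat[OF l0 p0 lp _ _ _ ndiff] h by blast
      obtain w1 where w1: "instability d F E0 w1" using destab E0 unfolding adapted_def by blast
      let ?S = "support_in d E0 F"
      note sf = supp_facts[OF E0(1) form]
      have c01: "coord_sys (swap01 E0)" by (rule coord_swap01[OF E0(1)])
      have c12: "coord_sys (swap12 E0)" by (rule coord_swap12[OF E0(1)])
      have c120: "coord_sys (swap12 (swap01 E0))" by (rule coord_swap12[OF c01])
      have c201: "coord_sys (swap01 (swap12 E0))" by (rule coord_swap01[OF c12])
      have c210: "coord_sys (swap01 (swap12 (swap01 E0)))" by (rule coord_swap01[OF c120])
      have s01: "support_in d (swap01 E0) F = sw01 ` ?S" by (rule support_swap01[OF E0(1) form])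
      have s12: "support_in d (swap12 E0) F = sw12 ` ?S" by (rule support_swap12[OF E0(1) form])
      have s120: "support_in d (swap12 (swap01 E0)) F = p120 ` ?S"
        unfolding support_swap12[OF c01 form] s01 image_image comp_p120 ..
      have s201: "support_in d (swap01 (swap12 E0)) F = p201 ` ?S"
        unfolding support_swap01[OF c12 form] s12 image_image comp_p201 ..
      have s210: "support_in d (swap01 (swap12 (swap01 E0))) F = p210 ` ?S"
        unfolding support_swap01[OF c120 form] support_swap12[OF c01 form] s01 image_image comp_p210 ..
      have a0: "\<exists>i\<in>?S. 3 * e0 i \<le> d"
      proof (rule ccontr)
        assume "\<not> ?thesis"
        then have "\<forall>i\<in>?S. d < 3 * e0 i" by (auto simp: not_le)
        then show False using cond_a_of[OF E0(1) form] nab by blast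
      qed
      have b2: "\<exists>i\<in>?S. d \<le> 3 * e2 i"
      proof (rule ccontr)
        assume "\<not> ?thesis"
        then have "\<forall>i\<in>?S. 3 * e2 i < d" by (auto simp: not_le)
        then show False using cond_b_of[OF E0(1) form] nab by blast
      qed
      have b0: "\<exists>i\<in>?S. d \<le> 3 * e0 i"
      proof (rule ccontr)
        assume "\<not> ?thesis"
        then have "\<forall>i\<in>?S. 3 * e0 i < d" by (auto simp: not_le)
        then have "\<forall>i\<in>support_in d (swap12 (swap01 E0)) F. 3 * e2 i < d" unfolding s120 by (auto simp: p120_def)
        then show False using cond_b_of[OF c120 form] nab by blast
      qed
      have w1': "balanced w1" "ordered w1" "\<forall>i\<in>?S. 0 < pairing i w1" using w1 by (auto simp: instability_def)
      have hyp2: "\<And>E'. coord_sys E' \<Longrightarrow> adapted E' l' p' \<Longrightarrow> \<exists>w. instability d F E' w"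
        using h unfolding adapted_def by blast
      have "\<exists>\<pi> w2. \<pi> \<in> {sw12, sw01, p210, p201, p120} \<and> balanced w2 \<and> ordered w2 \<and> (\<forall>i\<in>?S. 0 < pairing (\<pi> i) w2)"
      proof -
        have bo: "balanced w2" "ordered w2" if "instability d F E' w2" for E' w2 using that by (auto simp: instability_def)
        from alt show ?thesis
        proof (elim disjE)
          assume a: "adapted (swap12 E0) l' p'"
          obtain w2 where i2: "instability d F (swap12 E0) w2" using hyp2[OF c12 a] by blast
          have "\<forall>i\<in>?S. 0 < pairing (sw12 i) w2" by (rule inst_perm[OF i2 s12])
          then show ?thesis using bo[OF i2] by (intro exI[of _ sw12] exI[of _ w2]) simp
        next
          assume a: "adapted (swap01 E0) l' p'"
          obtain w2 where i2: "instability d F (swap01 E0) w2" using hyp2[OF c01 a] by blast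
          have "\<forall>i\<in>?S. 0 < pairing (sw01 i) w2" by (rule inst_perm[OF i2 s01])
          then show ?thesis using bo[OF i2] by (intro exI[of _ sw01] exI[of _ w2]) simp
        next
          assume a: "adapted (swap12 (swap01 E0)) l' p'"
          obtain w2 where i2: "instability d F (swap12 (swap01 E0)) w2" using hyp2[OF c120 a] by blast
          have "\<forall>i\<in>?S. 0 < pairing (p120 i) w2" by (rule inst_perm[OF i2 s120])
          then show ?thesis using bo[OF i2] by (intro exI[of _ p120] exI[of _ w2]) simp
        next
          assume a: "adapted (swap01 (swap12 E0)) l' p'"
          obtain w2 where i2: "instability d F (swap01 (swap12 E0)) w2" using hyp2[OF c201 a] by blast
          have "\<forall>i\<in>?S. 0 < pairing (p201 i) w2" by (rule inst_perm[OF i2 s201])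
          then show ?thesis using bo[OF i2] by (intro exI[of _ p201] exI[of _ w2]) simp
        next
          assume a: "adapted (swap01 (swap12 (swap01 E0))) l' p'"
          obtain w2 where i2: "instability d F (swap01 (swap12 (swap01 E0))) w2" using hyp2[OF c210 a] by blast
          have "\<forall>i\<in>?S. 0 < pairing (p210 i) w2" by (rule inst_perm[OF i2 s210])
          then show ?thesis using bo[OF i2] by (intro exI[of _ p210] exI[of _ w2]) simp
        qed
      qed
      then obtain \<pi> w2 where pw: "\<pi> \<in> {sw12, sw01, p210, p201, p120}" "balanced w2" "ordered w2" "\<forall>i\<in>?S. 0 < pairing (\<pi> i) w2"
        by blast
      show False by (rule uniq_comb[OF sf(3) a0 b0 b2 w1' pw(2,3) pw(1) pw(4)])
    qed
    show "\<exists>l p. l \<noteq> (0, 0, 0) \<and> p \<noteq> (0, 0, 0) \<and> dot l p = 0 \<and> (cond_c d F l p \<or> cond_d d F l p) \<and>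
         (\<forall>E. coord_sys E \<and> proportional (fst E) l \<and> dot (fst E) p = 0 \<and> dot (fst (snd E)) p = 0
              \<longrightarrow> (\<exists>w. instability d F E w)) \<and>
         (\<forall>l' p'. l' \<noteq> (0, 0, 0) \<and> p' \<noteq> (0, 0, 0) \<and> dot l' p' = 0 \<and> (cond_c d F l' p' \<or> cond_d d F l' p') \<and>
            (\<forall>E. coord_sys E \<and> proportional (fst E) l' \<and> dot (fst E) p' = 0 \<and> dot (fst (snd E)) p' = 0
                 \<longrightarrow> (\<exists>w. instability d F E w))
            \<longrightarrow> proportional l' l \<and> proportional p' p)"
      using l0 p0 lp cd destab uniq by blast
  qed
  show ?thesis using P1 P2 P3 P4 by blast
qed


end
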